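(* Let $F$ be a field of characteristic $\neq 2$, let $O$ be a Cayley algebra over $F$, $V=\operatorname{im}(O)$ and $$\mathcal{B}=\{\operatorname{im}(H)\colon H\text{ is a 4-dimensional subalgebra of } O\}.$$ Then $(V,\mathcal{B})$ is a $(7,3,2)$ $q$-covering design (every 2-dimensional subspace of $V$ lies in at least one element of $\mathcal{B}$, and each element of $\mathcal{B}$ is 3-dimensional), it is inclusion-minimal (no proper subcollection of $\mathcal{B}$ covers all 2-dimensional subspaces of $V$), and it is a $2$-$(7,3,1)$ subspace design (every 2-dimensional subspace lies in exactly one element of $\mathcal{B}$) if and only if $O$ is a division algebra.
   Context: All algebras are finite-dimensional unital, not necessarily associative $F$-algebras; subalgebras contain $1$. An involution is a linear map $*$ with $(ab)^*=b^*a^*$, $(a^* )^*=a$. Cayley–Dickson algebras: $F$ (identity involution) is one; if $A$ is one with involution $*$ and $\gamma\in F^\times$, then $D_\gamma(A)=A\oplus A$ with elements written $a+ib$, multiplication $(a+ib)(c+id)=(ac+\gamma db^* )+i(a^*d+cb)$ and involution $(a+ib)^*=a^*-ib$ is one. A Cayley algebra is $D_\gamma(D_\beta(D_\alpha(F)))$ with $\alpha,\beta,\gamma\in F^\times$. $\operatorname{im}(H)=\{a\in H:a^*=-a\}$. A division algebra is one without zero divisors. A $(v,k,t)$ $q$-covering design on a $v$-dimensional space $V$ is a set of $k$-dimensional subspaces of $V$ such that every $t$-dimensional subspace of $V$ is contained in at least one of them. *)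

theory Defs
  imports Complex_Main "HOL-Library.Product_Plus"
begin

text \<open>Elements a + i b of D_gamma(A) are represented as pairs (a, b).
  sc is the scalar multiplication of F on A, m the multiplication of A, s its involution.\<close>

definition cd_mult ::
  "('a \<Rightarrow> 'b::ab_group_add \<Rightarrow> 'b) \<Rightarrow> ('b \<Rightarrow> 'b \<Rightarrow> 'b) \<Rightarrow> ('b \<Rightarrow> 'b) \<Rightarrow> 'a
     \<Rightarrow> 'b \<times> 'b \<Rightarrow> 'b \<times> 'b \<Rightarrow> 'b \<times> 'b" where
  "cd_mult sc m s g x y =
     (case x of (a, b) \<Rightarrow> case y of (c, d) \<Rightarrow>
        (m a c + sc g (m d (s b)), m (s a) d + m c b))"

definition cd_conj :: "('b \<Rightarrow> 'b) \<Rightarrow> 'b \<times> 'b \<Rightarrow> 'b::ab_group_add \<times> 'b" where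
  "cd_conj s x = (s (fst x), - snd x)"

definition pair_scale :: "('a \<Rightarrow> 'b \<Rightarrow> 'b) \<Rightarrow> 'a \<Rightarrow> 'b \<times> 'b \<Rightarrow> 'b \<times> 'b" where
  "pair_scale sc r x = (sc r (fst x), sc r (snd x))"

text \<open>Level 1: D_alpha(F), level 2: D_beta(D_alpha(F)), level 3: the Cayley algebra
  D_gamma(D_beta(D_alpha(F))).  Base level F has multiplication (*) and identity involution.\<close>

definition scale1 :: "'a::field \<Rightarrow> 'a \<times> 'a \<Rightarrow> 'a \<times> 'a" where
  "scale1 = pair_scale (*)"
definition mult1 :: "'a::field \<Rightarrow> 'a \<times> 'a \<Rightarrow> 'a \<times> 'a \<Rightarrow> 'a \<times> 'a" where
  "mult1 \<alpha> = cd_mult (*) (*) id \<alpha>"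
definition conj1 :: "'a::field \<times> 'a \<Rightarrow> 'a \<times> 'a" where
  "conj1 = cd_conj id"

type_synonym 'a quat = "('a \<times> 'a) \<times> ('a \<times> 'a)"
type_synonym 'a oct = "'a quat \<times> 'a quat"

definition scale2 :: "'a::field \<Rightarrow> 'a quat \<Rightarrow> 'a quat" where
  "scale2 = pair_scale scale1"
definition mult2 :: "'a::field \<Rightarrow> 'a \<Rightarrow> 'a quat \<Rightarrow> 'a quat \<Rightarrow> 'a quat" where
  "mult2 \<alpha> \<beta> = cd_mult scale1 (mult1 \<alpha>) conj1 \<beta>"
definition conj2 :: "'a::field quat \<Rightarrow> 'a quat" where
  "conj2 = cd_conj conj1"

definition oct_scale :: "'a::field \<Rightarrow> 'a oct \<Rightarrow> 'a oct" where
  "oct_scale = pair_scale scale2"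
definition oct_mult :: "'a::field \<Rightarrow> 'a \<Rightarrow> 'a \<Rightarrow> 'a oct \<Rightarrow> 'a oct \<Rightarrow> 'a oct" where
  "oct_mult \<alpha> \<beta> \<gamma> = cd_mult scale2 (mult2 \<alpha> \<beta>) conj2 \<gamma>"
definition oct_conj :: "'a::field oct \<Rightarrow> 'a oct" where
  "oct_conj = cd_conj conj2"
definition oct_one :: "'a::field oct" where
  "oct_one = (((1, 0), (0, 0)), ((0, 0), (0, 0)))"

definition oct_subalgebra :: "'a::field \<Rightarrow> 'a \<Rightarrow> 'a \<Rightarrow> 'a oct set \<Rightarrow> bool" where
  "oct_subalgebra \<alpha> \<beta> \<gamma> H \<longleftrightarrow>
     module.subspace oct_scale H \<and> oct_one \<in> H \<and>
     (\<forall>x\<in>H. \<forall>y\<in>H. oct_mult \<alpha> \<beta> \<gamma> x y \<in> H)"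

definition im_of :: "'a::field oct set \<Rightarrow> 'a oct set" where
  "im_of H = {a \<in> H. oct_conj a = - a}"

definition oct_division :: "'a::field \<Rightarrow> 'a \<Rightarrow> 'a \<Rightarrow> bool" where
  "oct_division \<alpha> \<beta> \<gamma> \<longleftrightarrow> (\<forall>x y. oct_mult \<alpha> \<beta> \<gamma> x y = 0 \<longrightarrow> x = 0 \<or> y = 0)"

definition q_covers :: "('a::field \<Rightarrow> 'b::ab_group_add \<Rightarrow> 'b) \<Rightarrow> 'b set \<Rightarrow> nat \<Rightarrow> 'b set set \<Rightarrow> bool" where
  "q_covers sc V t B \<longleftrightarrow>
     (\<forall>W. module.subspace sc W \<and> W \<subseteq> V \<and> vector_space.dim sc W = t \<longrightarrow> (\<exists>U\<in>B. W \<subseteq> U))"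

definition q_covering_design ::
  "('a::field \<Rightarrow> 'b::ab_group_add \<Rightarrow> 'b) \<Rightarrow> 'b set \<Rightarrow> nat \<Rightarrow> nat \<Rightarrow> nat \<Rightarrow> 'b set set \<Rightarrow> bool" where
  "q_covering_design sc V v k t B \<longleftrightarrow>
     module.subspace sc V \<and> vector_space.dim sc V = v \<and>
     (\<forall>U\<in>B. module.subspace sc U \<and> U \<subseteq> V \<and> vector_space.dim sc U = k) \<and>
     q_covers sc V t B"

definition q_covering_minimal :: "('a::field \<Rightarrow> 'b::ab_group_add \<Rightarrow> 'b) \<Rightarrow> 'b set \<Rightarrow> nat \<Rightarrow> 'b set set \<Rightarrow> bool" where
  "q_covering_minimal sc V t B \<longleftrightarrow> (\<forall>B'. B' \<subset> B \<longrightarrow> \<not> q_covers sc V t B')"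

definition q_subspace_design ::
  "('a::field \<Rightarrow> 'b::ab_group_add \<Rightarrow> 'b) \<Rightarrow> 'b set \<Rightarrow> nat \<Rightarrow> nat \<Rightarrow> nat \<Rightarrow> nat \<Rightarrow> 'b set set \<Rightarrow> bool" where
  "q_subspace_design sc V t v k lam B \<longleftrightarrow>
     module.subspace sc V \<and> vector_space.dim sc V = v \<and>
     (\<forall>U\<in>B. module.subspace sc U \<and> U \<subseteq> V \<and> vector_space.dim sc U = k) \<and>
     (\<forall>W. module.subspace sc W \<and> W \<subseteq> V \<and> vector_space.dim sc W = t \<longrightarrow>
        finite {U\<in>B. W \<subseteq> U} \<and> card {U\<in>B. W \<subseteq> U} = lam)"

end

theory Submission
  imports Defs
begin

definition k0 :: "'a oct \<Rightarrow> 'a" where "k0 x = fst (fst (fst x))"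
definition k1 :: "'a oct \<Rightarrow> 'a" where "k1 x = snd (fst (fst x))"
definition k2 :: "'a oct \<Rightarrow> 'a" where "k2 x = fst (snd (fst x))"
definition k3 :: "'a oct \<Rightarrow> 'a" where "k3 x = snd (snd (fst x))"
definition k4 :: "'a oct \<Rightarrow> 'a" where "k4 x = fst (fst (snd x))"
definition k5 :: "'a oct \<Rightarrow> 'a" where "k5 x = snd (fst (snd x))"
definition k6 :: "'a oct \<Rightarrow> 'a" where "k6 x = fst (snd (snd x))"
definition k7 :: "'a oct \<Rightarrow> 'a" where "k7 x = snd (snd (snd x))"

definition mk :: "'a \<Rightarrow> 'a \<Rightarrow> 'a \<Rightarrow> 'a \<Rightarrow> 'a \<Rightarrow> 'a \<Rightarrow> 'a \<Rightarrow> 'a \<Rightarrow> 'a oct" where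
  "mk a0 a1 a2 a3 a4 a5 a6 a7 = (((a0,a1),(a2,a3)),((a4,a5),(a6,a7)))"

lemmas kdefs = k0_def k1_def k2_def k3_def k4_def k5_def k6_def k7_def

lemma k_mk[simp]:
  "k0 (mk a0 a1 a2 a3 a4 a5 a6 a7) = a0" "k1 (mk a0 a1 a2 a3 a4 a5 a6 a7) = a1"
  "k2 (mk a0 a1 a2 a3 a4 a5 a6 a7) = a2" "k3 (mk a0 a1 a2 a3 a4 a5 a6 a7) = a3"
  "k4 (mk a0 a1 a2 a3 a4 a5 a6 a7) = a4" "k5 (mk a0 a1 a2 a3 a4 a5 a6 a7) = a5"
  "k6 (mk a0 a1 a2 a3 a4 a5 a6 a7) = a6" "k7 (mk a0 a1 a2 a3 a4 a5 a6 a7) = a7"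
  by (simp_all add: kdefs mk_def)

lemma oct_eq_iff: "x = y \<longleftrightarrow> k0 x = k0 y \<and> k1 x = k1 y \<and> k2 x = k2 y \<and> k3 x = k3 y
   \<and> k4 x = k4 y \<and> k5 x = k5 y \<and> k6 x = k6 y \<and> k7 x = k7 y"
  by (auto simp: kdefs prod_eq_iff)

lemma k_add[simp]:
  "k0 (x+y) = k0 x + k0 y" "k1 (x+y) = k1 x + k1 y" "k2 (x+y) = k2 x + k2 y" "k3 (x+y) = k3 x + k3 y"
  "k4 (x+y) = k4 x + k4 y" "k5 (x+y) = k5 x + k5 y" "k6 (x+y) = k6 x + k6 y" "k7 (x+y) = k7 x + k7 y"
  by (simp_all add: kdefs)

lemma k_diff[simp]:
  "k0 (x-y) = k0 x - k0 y" "k1 (x-y) = k1 x - k1 y" "k2 (x-y) = k2 x - k2 y" "k3 (x-y) = k3 x - k3 y"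
  "k4 (x-y) = k4 x - k4 y" "k5 (x-y) = k5 x - k5 y" "k6 (x-y) = k6 x - k6 y" "k7 (x-y) = k7 x - k7 y"
  by (simp_all add: kdefs)

lemma k_uminus[simp]:
  "k0 (-x) = - k0 x" "k1 (-x) = - k1 x" "k2 (-x) = - k2 x" "k3 (-x) = - k3 x"
  "k4 (-x) = - k4 x" "k5 (-x) = - k5 x" "k6 (-x) = - k6 x" "k7 (-x) = - k7 x"
  by (simp_all add: kdefs)

lemma k_zero[simp]:
  "k0 0 = 0" "k1 0 = 0" "k2 0 = 0" "k3 0 = 0" "k4 0 = 0" "k5 0 = 0" "k6 0 = 0" "k7 0 = 0"
  by (simp_all add: kdefs)

lemma k_scale[simp]:
  fixes x :: "'a::field oct"
  shows
  "k0 (oct_scale c x) = c * k0 x" "k1 (oct_scale c x) = c * k1 x" "k2 (oct_scale c x) = c * k2 x"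
  "k3 (oct_scale c x) = c * k3 x" "k4 (oct_scale c x) = c * k4 x" "k5 (oct_scale c x) = c * k5 x"
  "k6 (oct_scale c x) = c * k6 x" "k7 (oct_scale c x) = c * k7 x"
  by (simp_all add: kdefs oct_scale_def scale2_def scale1_def pair_scale_def)

lemma k_one[simp]:
  "k0 (oct_one::'a::field oct) = 1" "k1 (oct_one::'a::field oct) = 0" "k2 (oct_one::'a::field oct) = 0"
  "k3 (oct_one::'a::field oct) = 0" "k4 (oct_one::'a::field oct) = 0" "k5 (oct_one::'a::field oct) = 0"
  "k6 (oct_one::'a::field oct) = 0" "k7 (oct_one::'a::field oct) = 0"
  by (simp_all add: kdefs oct_one_def)

lemma k_conj[simp]:
  fixes x :: "'a::field oct"
  shows
  "k0 (oct_conj x) = k0 x" "k1 (oct_conj x) = - k1 x" "k2 (oct_conj x) = - k2 x"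
  "k3 (oct_conj x) = - k3 x" "k4 (oct_conj x) = - k4 x" "k5 (oct_conj x) = - k5 x"
  "k6 (oct_conj x) = - k6 x" "k7 (oct_conj x) = - k7 x"
  by (simp_all add: kdefs oct_conj_def conj2_def conj1_def cd_conj_def)

lemma k_mult:
  fixes x :: "'a::field oct"
  shows
  "k0 (oct_mult \<alpha> \<beta> \<gamma> x y) = k0 x * k0 y + \<alpha> * k1 x * k1 y + \<beta> * k2 x * k2 y - \<alpha>*\<beta>* k3 x * k3 y
     + \<gamma> * k4 x * k4 y - \<alpha>*\<gamma>*k5 x * k5 y - \<beta>*\<gamma>* k6 x * k6 y + \<alpha>*\<beta>*\<gamma>* k7 x * k7 y"
  by (simp add: kdefs oct_mult_def mult2_def mult1_def cd_mult_def conj2_def conj1_def cd_conj_def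
      scale2_def scale1_def pair_scale_def split_def algebra_simps)

lemma mk_eq_iff: "mk a0 a1 a2 a3 a4 a5 a6 a7 = mk b0 b1 b2 b3 b4 b5 b6 b7 \<longleftrightarrow>
  a0 = b0 \<and> a1 = b1 \<and> a2 = b2 \<and> a3 = b3 \<and> a4 = b4 \<and> a5 = b5 \<and> a6 = b6 \<and> a7 = b7"
  by (simp add: mk_def)

lemma oct_vs: "vector_space (oct_scale :: 'a::field \<Rightarrow> 'a oct \<Rightarrow> 'a oct)"
  by unfold_locales (simp_all add: oct_eq_iff algebra_simps)

interpretation OVS: vector_space "oct_scale :: 'a::field \<Rightarrow> 'a oct \<Rightarrow> 'a oct"
  by (rule oct_vs)

definition E0 :: "'a::field oct" where "E0 = mk 1 0 0 0 0 0 0 0"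
definition E1 :: "'a::field oct" where "E1 = mk 0 1 0 0 0 0 0 0"
definition E2 :: "'a::field oct" where "E2 = mk 0 0 1 0 0 0 0 0"
definition E3 :: "'a::field oct" where "E3 = mk 0 0 0 1 0 0 0 0"
definition E4 :: "'a::field oct" where "E4 = mk 0 0 0 0 1 0 0 0"
definition E5 :: "'a::field oct" where "E5 = mk 0 0 0 0 0 1 0 0"
definition E6 :: "'a::field oct" where "E6 = mk 0 0 0 0 0 0 1 0"
definition E7 :: "'a::field oct" where "E7 = mk 0 0 0 0 0 0 0 1"
lemmas Edefs = E0_def E1_def E2_def E3_def E4_def E5_def E6_def E7_def

definition OB :: "'a::field oct set" where "OB = {E0,E1,E2,E3,E4,E5,E6,E7}"

lemma oct_expand: "(x::'a::field oct) = oct_scale (k0 x) E0 + oct_scale (k1 x) E1 + oct_scale (k2 x) E2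
  + oct_scale (k3 x) E3 + oct_scale (k4 x) E4 + oct_scale (k5 x) E5 + oct_scale (k6 x) E6 + oct_scale (k7 x) E7"
  by (simp add: oct_eq_iff Edefs)

lemma OB_indep: "OVS.independent (OB :: 'a::field oct set)"
proof (rule OVS.independent_if_scalars_zero)
  show "finite (OB::'a oct set)" by (simp add: OB_def)
  fix f :: "'a oct \<Rightarrow> 'a" and x :: "'a oct"
  assume s: "(\<Sum>x\<in>OB. oct_scale (f x) x) = 0" and x: "x \<in> OB"
  have "(\<Sum>x\<in>OB. oct_scale (f x) x) = mk (f E0) (f E1) (f E2) (f E3) (f E4) (f E5) (f E6) (f E7)"
    by (simp add: OB_def Edefs mk_eq_iff oct_eq_iff)
  with s have "mk (f E0) (f E1) (f E2) (f E3) (f E4) (f E5) (f E6) (f E7) = mk 0 0 0 0 0 0 0 0" 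
    by (simp add: oct_eq_iff)
  then show "f x = 0" using x by (auto simp: mk_eq_iff OB_def)
qed

lemma OB_span: "OVS.span (OB :: 'a::field oct set) = UNIV"
proof -
  have "x \<in> OVS.span OB" for x :: "'a oct"
    apply (subst oct_expand)
    apply (intro OVS.span_add OVS.span_scale OVS.span_base)
    apply (auto simp: OB_def)
    done
  then show ?thesis by auto
qed

interpretation OV: finite_dimensional_vector_space "oct_scale :: 'a::field \<Rightarrow> 'a oct \<Rightarrow> 'a oct" OB
  by unfold_locales (simp_all add: OB_def OB_indep[unfolded OB_def] OB_span[unfolded OB_def])

interpretation OVP: finite_dimensional_vector_space_pair_1
  "oct_scale :: 'a::field \<Rightarrow> 'a oct \<Rightarrow> 'a oct" OB "oct_scale :: 'a::field \<Rightarrow> 'a oct \<Rightarrow> 'a oct"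
  by unfold_locales


locale octo =
  fixes \<alpha> \<beta> \<gamma> :: "'a::field"
  assumes two: "(2::'a) \<noteq> 0" and anz: "\<alpha> \<noteq> 0" and bnz: "\<beta> \<noteq> 0" and gnz: "\<gamma> \<noteq> 0"
begin

definition cr :: "'a oct \<Rightarrow> 'a oct \<Rightarrow> 'a oct" where
 "cr x y = mk 0
   (\<beta> * (k2 x * k3 y - k3 x * k2 y) + \<gamma> * (k4 x * k5 y - k5 x * k4 y) + \<beta> * \<gamma> * (k6 x * k7 y - k7 x * k6 y))
   (-\<alpha> * (k1 x * k3 y - k3 x * k1 y) + \<gamma> * (k4 x * k6 y - k6 x * k4 y) -\<alpha> * \<gamma> * (k5 x * k7 y - k7 x * k5 y))
   (-(k1 x * k2 y - k2 x * k1 y) + \<gamma> * (k4 x * k7 y - k7 x * k4 y) -\<gamma> * (k5 x * k6 y - k6 x * k5 y))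
   (-\<alpha> * (k1 x * k5 y - k5 x * k1 y) -\<beta> * (k2 x * k6 y - k6 x * k2 y) +\<alpha> * \<beta> * (k3 x * k7 y - k7 x * k3 y))
   (-(k1 x * k4 y - k4 x * k1 y) -\<beta> * (k2 x * k7 y - k7 x * k2 y) +\<beta> * (k3 x * k6 y - k6 x * k3 y))
   (\<alpha> * (k1 x * k7 y - k7 x * k1 y) -(k2 x * k4 y - k4 x * k2 y) -\<alpha> * (k3 x * k5 y - k5 x * k3 y))
   ((k1 x * k6 y - k6 x * k1 y) -(k2 x * k5 y - k5 x * k2 y) -(k3 x * k4 y - k4 x * k3 y))"

definition bf :: "'a oct \<Rightarrow> 'a oct \<Rightarrow> 'a" where
 "bf x y = - \<alpha> * k1 x * k1 y - \<beta> * k2 x * k2 y + \<alpha>*\<beta>* k3 x * k3 y - \<gamma> * k4 x * k4 y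
    + \<alpha>*\<gamma>* k5 x*k5 y + \<beta>*\<gamma>*k6 x*k6 y - \<alpha>*\<beta>*\<gamma>*k7 x * k7 y"

definition VV :: "'a oct set" where "VV = {x. k0 x = 0}"

lemma mult_decomp:
  "oct_mult \<alpha> \<beta> \<gamma> x y = oct_scale (k0 x * k0 y - bf x y) oct_one
     + oct_scale (k0 x) (y - oct_scale (k0 y) oct_one) + oct_scale (k0 y) (x - oct_scale (k0 x) oct_one) + cr x y"
  unfolding oct_eq_iff cr_def bf_def
  apply (simp only: k_mk k_add k_scale k_diff k_one)
  apply (simp add: kdefs oct_mult_def mult2_def mult1_def cd_mult_def conj2_def conj1_def cd_conj_def
      scale2_def scale1_def pair_scale_def split_def)
  apply (intro conjI; simp add: algebra_simps)
  done

lemma K: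
  assumes "x \<in> VV" "y \<in> VV"
  shows "cr x (cr x y) = oct_scale (bf x y) x - oct_scale (bf x x) y"
  using assms unfolding oct_eq_iff VV_def cr_def bf_def mem_Collect_eq
  apply (simp only: k_mk k_add k_scale k_diff)
  apply (intro conjI; simp add: algebra_simps)
  done

lemma cyc: "bf (cr x y) z = bf x (cr y z)"
  unfolding cr_def bf_def by (simp add: algebra_simps)

definition Phi where "Phi a b c = cr a (cr b c) - oct_scale (bf a c) b + oct_scale (bf a b) c"

lemma Phi_cyc:
  assumes "a \<in> VV" "b \<in> VV" "c \<in> VV"
  shows "Phi a b c = Phi c a b"
  using assms unfolding oct_eq_iff VV_def Phi_def cr_def bf_def mem_Collect_eq
  apply (simp only: k_mk k_add k_scale k_diff)
  apply (intro conjI; simp add: algebra_simps)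
  done


lemma cr_simps[simp]:
  "cr (x + y) z = cr x z + cr y z"
  "cr z (x + y) = cr z x + cr z y"
  "cr (oct_scale c x) y = oct_scale c (cr x y)"
  "cr y (oct_scale c x) = oct_scale c (cr y x)"
  "cr (x - y) z = cr x z - cr y z"
  "cr z (x - y) = cr z x - cr z y"
  "cr (- x) y = - cr x y"
  "cr y (- x) = - cr y x"
  "cr 0 y = 0" "cr y 0 = 0"
  "cr x x = 0"
  by (simp_all add: oct_eq_iff cr_def algebra_simps)

lemma cr_anti: "cr x y = - cr y x"
  by (simp add: oct_eq_iff cr_def algebra_simps)

lemma bf_simps[simp]:
  "bf (x + y) z = bf x z + bf y z"
  "bf z (x + y) = bf z x + bf z y"
  "bf (oct_scale c x) y = c * bf x y"
  "bf y (oct_scale c x) = c * bf y x"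
  "bf (x - y) z = bf x z - bf y z"
  "bf z (x - y) = bf z x - bf z y"
  "bf (- x) y = - bf x y"
  "bf y (- x) = - bf y x"
  "bf 0 y = 0" "bf y 0 = 0"
  by (simp_all add: bf_def algebra_simps)

lemma bf_sym: "bf x y = bf y x"
  by (simp add: bf_def algebra_simps)

lemma bf_cr_self[simp]:
  "bf (cr x y) x = 0" "bf (cr x y) y = 0" "bf x (cr x y) = 0" "bf y (cr x y) = 0"
  by (simp_all add: bf_def cr_def algebra_simps)

lemma VV_simps[simp]:
  "0 \<in> VV" "cr x y \<in> VV"
  "x \<in> VV \<Longrightarrow> y \<in> VV \<Longrightarrow> x + y \<in> VV"
  "x \<in> VV \<Longrightarrow> y \<in> VV \<Longrightarrow> x - y \<in> VV"
  "x \<in> VV \<Longrightarrow> - x \<in> VV"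
  "x \<in> VV \<Longrightarrow> oct_scale c x \<in> VV"
  by (simp_all add: VV_def cr_def)

lemma VV_sub: "OVS.subspace VV"
  by (simp add: OVS.subspace_def)

lemma scale_simps:
  "oct_scale a (x + y) = oct_scale a x + oct_scale a y"
  "oct_scale (a + b) x = oct_scale a x + oct_scale b x"
  "oct_scale a (oct_scale b x) = oct_scale (a * b) x"
  "oct_scale 1 x = x" "oct_scale 0 x = 0" "oct_scale a 0 = 0"
  "oct_scale a (x - y) = oct_scale a x - oct_scale a y"
  "oct_scale (a - b) x = oct_scale a x - oct_scale b x"
  "oct_scale a (- x) = - oct_scale a x"
  "oct_scale (- a) x = - oct_scale a x"
  by (simp_all add: oct_eq_iff algebra_simps)

lemma K':
  assumes "x \<in> VV" "y \<in> VV"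
  shows "cr x (cr x y) = oct_scale (bf x y) x + oct_scale (- bf x x) y"
  using K[OF assms] by (simp add: scale_simps)

lemma K2:
  assumes "x \<in> VV" "y \<in> VV"
  shows "cr y (cr x y) = oct_scale (bf y y) x + oct_scale (- bf x y) y"
proof -
  have "cr y (cr x y) = - cr y (cr y x)" by (subst cr_anti) simp
  also have "\<dots> = oct_scale (bf y y) x + oct_scale (- bf x y) y"
    using K'[OF assms(2,1)] by (simp add: bf_sym)
  finally show ?thesis .
qed

lemma bf_crcr:
  assumes "p \<in> VV" "y \<in> VV" "y' \<in> VV"
  shows "bf (cr p y) (cr p y') = bf p p * bf y y' - bf p y * bf p y'"
proof -
  have "bf (cr p y) (cr p y') = - bf (cr y p) (cr p y')" by (subst cr_anti) simp
  also have "\<dots> = - bf y (cr p (cr p y'))" by (simp only: cyc)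
  also have "\<dots> = bf p p * bf y y' - bf p y * bf p y'"
    by (subst K'[OF assms(1,3)]) (simp add: bf_sym algebra_simps)
  finally show ?thesis .
qed

lemma two_cancel_s: assumes "(a::'a) + a = b + b" shows "a = b"
proof -
  have "2 * a = 2 * b" using assms by (metis mult_2)
  then show ?thesis using two by simp
qed

lemma two_cancel: "x + x = y + y \<Longrightarrow> (x::'a oct) = y"
  unfolding oct_eq_iff by (auto intro: two_cancel_s)

lemma lin_half_s: assumes "-a - c = a + (c::'a)" shows "a = -c"
proof (rule two_cancel_s)
  show "a + a = - c + - c" using assms by algebra
qed

lemma lin_half: "- t - x = t + (x::'a oct) \<Longrightarrow> t = - x"
  unfolding oct_eq_iff by (auto intro: lin_half_s)

lemma Opp:
  assumes VV: "p \<in> VV" "z \<in> VV" "u \<in> VV"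
    and pz: "cr p z = z" and pu: "cr p u = - u"
  shows "cr z u = oct_scale (- bf z u) p"
proof -
  have bpz: "bf p z = 0" using bf_cr_self(3)[of p z] pz by simp
  have bpu: "bf p u = 0" using bf_cr_self(3)[of p u] pu by simp
  have 1: "Phi p z u = Phi u p z" using Phi_cyc[OF VV] .
  have 2: "Phi z u p = Phi p z u" using Phi_cyc[OF VV(2,3,1)] .
  have up: "cr u p = u" using pu by (subst cr_anti) simp
  have e1: "Phi u p z = cr u z - oct_scale (bf u z) p"
    using bpu by (simp add: Phi_def pz bf_sym)
  have e2: "Phi z u p = cr z u + oct_scale (bf z u) p"
    using bpz by (simp add: Phi_def up bf_sym)
  from 1 2 e1 e2 have "cr u z - oct_scale (bf u z) p = cr z u + oct_scale (bf z u) p" by simp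
  then have "- cr z u - oct_scale (bf z u) p = cr z u + oct_scale (bf z u) p"
    by (metis cr_anti bf_sym)
  then have "cr z u = - oct_scale (bf z u) p" by (rule lin_half)
  then show ?thesis by (simp add: scale_simps)
qed

end

context octo
begin

definition ind2 :: "'a oct \<Rightarrow> 'a oct \<Rightarrow> bool" where
  "ind2 x y \<longleftrightarrow> (\<forall>a b. oct_scale a x + oct_scale b y = 0 \<longrightarrow> a = 0 \<and> b = 0)"

lemma ind2_coef:
  assumes "ind2 x y" "oct_scale a x + oct_scale b y = oct_scale a' x + oct_scale b' y"
  shows "a = a' \<and> b = b'"
proof -
  have "oct_scale (a - a') x + oct_scale (b - b') y
        = (oct_scale a x + oct_scale b y) - (oct_scale a' x + oct_scale b' y)"
    by (simp add: scale_simps algebra_simps)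
  also have "\<dots> = 0" using assms(2) by simp
  finally have "a - a' = 0 \<and> b - b' = 0" using assms(1) unfolding ind2_def by blast
  then show ?thesis by simp
qed

lemma ind2_nz: assumes "ind2 x y" shows "x \<noteq> 0 \<and> y \<noteq> 0"
proof
  show "x \<noteq> 0"
  proof
    assume "x = 0"
    then have "oct_scale 1 x + oct_scale 0 y = 0" by (simp add: scale_simps)
    then have "(1::'a) = 0 \<and> (0::'a) = 0" using assms unfolding ind2_def by blast
    then show False by simp
  qed
  show "y \<noteq> 0"
  proof
    assume "y = 0"
    then have "oct_scale 0 x + oct_scale 1 y = 0" by (simp add: scale_simps)
    then have "(0::'a) = 0 \<and> (1::'a) = 0" using assms unfolding ind2_def by blast
    then show False by simp
  qed
qed

lemma ind2_sym: assumes "ind2 x y" shows "ind2 y x"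
  unfolding ind2_def
proof (intro allI impI)
  fix a b assume "oct_scale a y + oct_scale b x = 0"
  then have "oct_scale b x + oct_scale a y = 0" by (simp add: add.commute)
  then show "a = 0 \<and> b = 0" using assms unfolding ind2_def by blast
qed

lemma ind2_neq: "ind2 x y \<Longrightarrow> x \<noteq> y"
proof
  assume "ind2 x y" "x = y"
  then have "oct_scale 1 x + oct_scale (-1) y = 0" by (simp add: scale_simps)
  with \<open>ind2 x y\<close> have "(1::'a) = 0 \<and> (-1::'a) = 0" unfolding ind2_def by blast
  then show False by simp
qed

lemma in_span1: "w \<in> OVS.span {x} \<longleftrightarrow> (\<exists>a. w = oct_scale a x)"
  by (auto simp: OVS.span_singleton)

lemma in_span2: "w \<in> OVS.span {x, y} \<longleftrightarrow> (\<exists>a b. w = oct_scale a x + oct_scale b y)"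
proof
  assume "w \<in> OVS.span {x, y}"
  then obtain k a where "w - oct_scale k x = oct_scale a y"
    unfolding OVS.span_breakdown_eq[of w x "{y}"] in_span1 by blast
  then have "w = oct_scale k x + oct_scale a y" by (simp add: diff_eq_eq add.commute)
  then show "\<exists>a b. w = oct_scale a x + oct_scale b y" by blast
next
  assume "\<exists>a b. w = oct_scale a x + oct_scale b y"
  then obtain a b where "w = oct_scale a x + oct_scale b y" by blast
  then have "w - oct_scale a x = oct_scale b y" by simp
  then show "w \<in> OVS.span {x, y}" unfolding OVS.span_breakdown_eq[of w x "{y}"] in_span1 by blast
qed

lemma in_span3: "w \<in> OVS.span {x, y, z} \<longleftrightarrow> (\<exists>a b c. w = oct_scale a x + oct_scale b y + oct_scale c z)"
proof
  assume "w \<in> OVS.span {x, y, z}"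
  then obtain k a b where "w - oct_scale k x = oct_scale a y + oct_scale b z"
    unfolding OVS.span_breakdown_eq[of w x "{y, z}"] in_span2 by blast
  then have "w = oct_scale k x + oct_scale a y + oct_scale b z" by (simp add: diff_eq_eq add.commute add.assoc)
  then show "\<exists>a b c. w = oct_scale a x + oct_scale b y + oct_scale c z" by blast
next
  assume "\<exists>a b c. w = oct_scale a x + oct_scale b y + oct_scale c z"
  then obtain a b c where "w = oct_scale a x + oct_scale b y + oct_scale c z" by blast
  then have "w - oct_scale a x = oct_scale b y + oct_scale c z" by (simp add: add.assoc)
  then show "w \<in> OVS.span {x, y, z}" unfolding OVS.span_breakdown_eq[of w x "{y, z}"] in_span2 by blast
qed

lemma ind2_notin: assumes "ind2 x y" shows "x \<notin> OVS.span {y}"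
proof
  assume "x \<in> OVS.span {y}"
  then obtain a where "x = oct_scale a y" by (auto simp: in_span1)
  then have "oct_scale 1 x + oct_scale (- a) y = 0" by (simp add: scale_simps)
  then have "(1::'a) = 0 \<and> - a = 0" using assms unfolding ind2_def by blast
  then show False by simp
qed

lemma ind2_indep: "ind2 x y \<Longrightarrow> OVS.independent {x, y}"
  using ind2_nz ind2_neq ind2_notin
  by (auto simp: OVS.independent_insert)

lemma indep_ind2:
  assumes "OVS.independent {x, y}" "x \<noteq> y" shows "ind2 x y"
  unfolding ind2_def
proof (intro allI impI)
  fix a b assume h: "oct_scale a x + oct_scale b y = 0"
  have nx: "x \<notin> OVS.span {y}" and ny: "y \<noteq> 0"
    using assms by (auto simp: OVS.independent_insert)
  have "a = 0"
  proof (rule ccontr)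
    assume a: "a \<noteq> 0"
    have "x = oct_scale (- b / a) y"
    proof -
      have "oct_scale a x = - oct_scale b y" using h by (simp add: eq_neg_iff_add_eq_0)
      then have "oct_scale (inverse a) (oct_scale a x) = oct_scale (inverse a) (- oct_scale b y)" by simp
      then show ?thesis using a by (simp add: scale_simps divide_inverse mult.commute)
    qed
    then have "x \<in> OVS.span {y}" unfolding in_span1 by blast
    then show False using nx by blast
  qed
  with h ny show "a = 0 \<and> b = 0" by (simp add: scale_simps)
qed

lemma dim2: assumes "ind2 x y" shows "OVS.dim (OVS.span {x, y}) = 2"
proof -
  have "OVS.dim (OVS.span {x, y}) = card {x, y}"
    using OVS.dim_span_eq_card_independent[OF ind2_indep[OF assms]] .
  also have "\<dots> = 2" using ind2_neq[OF assms] by simp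
  finally show ?thesis .
qed

lemma dim3:
  assumes "ind2 x y" "z \<notin> OVS.span {x, y}"
  shows "OVS.dim (OVS.span {x, y, z}) = 3"
proof -
  have e: "{x, y, z} = insert z {x, y}" by auto
  have d2: "OVS.dim {x, y} = 2" using dim2[OF assms(1)] by (simp only: OVS.dim_span)
  have "OVS.dim (insert z {x, y}) = OVS.dim {x, y} + 1"
    by (subst OV.dim_insert) (simp only: assms(2) if_False)
  then have "OVS.dim {x, y, z} = 3" using d2 e by simp
  then show ?thesis by (simp only: OVS.dim_span)
qed

lemma sub2:
  assumes "OVS.subspace W" "OVS.dim W = 2"
  shows "\<exists>x y. x \<in> W \<and> y \<in> W \<and> ind2 x y \<and> W = OVS.span {x, y}"
proof -
  obtain B where B: "B \<subseteq> W" "OVS.independent B" "W \<subseteq> OVS.span B" "card B = OVS.dim W"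
    using OVS.basis_exists by blast
  from B(4) assms(2) have "card B = 2" by simp
  then obtain x y where xy: "B = {x, y}" "x \<noteq> y" unfolding card_2_iff by blast
  have "OVS.span B \<subseteq> W" using B(1) assms(1) OVS.span_minimal by blast
  moreover have "ind2 x y" using indep_ind2[of x y] B(2) xy by simp
  moreover have "x \<in> W" "y \<in> W" using B(1) xy by auto
  ultimately show ?thesis using B(3) xy by blast
qed

lemma sub2_eq:
  assumes "OVS.subspace W" "OVS.dim W = 2" "u \<in> W" "v \<in> W" "ind2 u v"
  shows "W = OVS.span {u, v}"
proof -
  have "OVS.span {u, v} \<subseteq> W" by (rule OVS.span_minimal) (use assms in auto)
  moreover have "OVS.dim (OVS.span {u, v}) \<ge> OVS.dim W" using dim2[OF assms(5)] assms(2) by simp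
  ultimately show ?thesis using OV.subspace_dim_equal[of "OVS.span {u,v}" W] assms(1) by auto
qed

lemma sub3_eq:
  assumes "OVS.subspace U" "OVS.dim U = 3" "x \<in> U" "y \<in> U" "z \<in> U" "ind2 x y"
    "z \<notin> OVS.span {x, y}"
  shows "U = OVS.span {x, y, z}"
proof -
  have "OVS.span {x, y, z} \<subseteq> U" by (rule OVS.span_minimal) (use assms in auto)
  moreover have "OVS.dim (OVS.span {x, y, z}) \<ge> OVS.dim U" using dim3[OF assms(6,7)] assms(2) by simp
  ultimately show ?thesis using OV.subspace_dim_equal[of "OVS.span {x,y,z}" U] assms(1) by auto
qed

lemma dim_ge2_ind2:
  assumes "OVS.subspace R" "OVS.dim R \<ge> 2"
  shows "\<exists>a b. a \<in> R \<and> b \<in> R \<and> ind2 a b"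
proof -
  obtain T where T: "OVS.subspace T" "T \<subseteq> OVS.span R" "OVS.dim T = 2"
    using OV.choose_subspace_of_subspace[OF assms(2)] by blast
  obtain a b where "a \<in> T" "b \<in> T" "ind2 a b" using sub2[OF T(1,3)] by blast
  moreover have "OVS.span R = R" using assms(1) by simp
  ultimately show ?thesis using T(2) by blast
qed

definition isblock :: "'a oct set \<Rightarrow> bool" where
  "isblock U \<longleftrightarrow> OVS.subspace U \<and> U \<subseteq> VV \<and> OVS.dim U = 3 \<and> (\<forall>x\<in>U. \<forall>y\<in>U. cr x y \<in> U)"

lemma span_cr_closed:
  assumes gen: "\<And>s t. s \<in> S \<Longrightarrow> t \<in> S \<Longrightarrow> cr s t \<in> OVS.span S"
    and a: "a \<in> OVS.span S" and b: "b \<in> OVS.span S"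
  shows "cr a b \<in> OVS.span S"
proof -
  have inner: "cr s b \<in> OVS.span S" if s: "s \<in> S" for s
    using b
  proof (induction rule: OVS.span_induct_alt)
    case base then show ?case by (simp add: OVS.span_zero)
  next
    case (step c x y)
    then show ?case using gen[OF s] by (simp add: OVS.span_add OVS.span_scale)
  qed
  show ?thesis using a
  proof (induction rule: OVS.span_induct_alt)
    case base then show ?case by (simp add: OVS.span_zero)
  next
    case (step c x y)
    then show ?case using inner by (simp add: OVS.span_add OVS.span_scale)
  qed
qed

lemma block_span3:
  assumes VV: "x \<in> VV" "y \<in> VV" "z \<in> VV" and ind: "ind2 x y" and nz: "z \<notin> OVS.span {x, y}"
    and c1: "cr x y \<in> OVS.span {x, y, z}" and c2: "cr x z \<in> OVS.span {x, y, z}"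
    and c3: "cr y z \<in> OVS.span {x, y, z}"
  shows "isblock (OVS.span {x, y, z})"
  unfolding isblock_def
proof (intro conjI ballI)
  show "OVS.subspace (OVS.span {x, y, z})" by simp
  show "OVS.span {x, y, z} \<subseteq> VV" by (rule OVS.span_minimal) (use VV VV_sub in auto)
  show "OVS.dim (OVS.span {x, y, z}) = 3" using dim3[OF ind nz] .
  fix a b assume "a \<in> OVS.span {x, y, z}" "b \<in> OVS.span {x, y, z}"
  then show "cr a b \<in> OVS.span {x, y, z}"
  proof (rule span_cr_closed[rotated])
    have neg: "cr t s \<in> OVS.span {x, y, z}" if "cr s t \<in> OVS.span {x, y, z}" for s t
      using OVS.span_neg[OF that] cr_anti[of t s] by simp
    fix s t assume "s \<in> {x, y, z}" "t \<in> {x, y, z}"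
    then show "cr s t \<in> OVS.span {x, y, z}"
      using c1 c2 c3 neg[OF c1] neg[OF c2] neg[OF c3] by (auto simp: OVS.span_zero)
  qed
qed

end

context octo
begin

lemma E_VV[simp]: "E1 \<in> VV" "E2 \<in> VV" "E3 \<in> VV" "E4 \<in> VV" "E5 \<in> VV" "E6 \<in> VV" "E7 \<in> VV"
  by (simp_all add: VV_def Edefs)

lemma V2:
  assumes "x \<in> VV" "x \<noteq> 0" shows "\<exists>w\<in>VV. bf x w \<noteq> 0"
proof -
  have "k1 x \<noteq> 0 \<or> k2 x \<noteq> 0 \<or> k3 x \<noteq> 0 \<or> k4 x \<noteq> 0 \<or> k5 x \<noteq> 0 \<or> k6 x \<noteq> 0 \<or> k7 x \<noteq> 0"
    using assms by (auto simp: VV_def oct_eq_iff)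
  then show ?thesis
  proof (elim disjE)
    assume "k1 x \<noteq> 0" then have "bf x E1 \<noteq> 0" using anz by (simp add: bf_def Edefs)
    then show ?thesis using E_VV by blast
  next
    assume "k2 x \<noteq> 0" then have "bf x E2 \<noteq> 0" using bnz by (simp add: bf_def Edefs)
    then show ?thesis using E_VV by blast
  next
    assume "k3 x \<noteq> 0" then have "bf x E3 \<noteq> 0" using anz bnz by (simp add: bf_def Edefs)
    then show ?thesis using E_VV by blast
  next
    assume "k4 x \<noteq> 0" then have "bf x E4 \<noteq> 0" using gnz by (simp add: bf_def Edefs)
    then show ?thesis using E_VV by blast
  next
    assume "k5 x \<noteq> 0" then have "bf x E5 \<noteq> 0" using anz gnz by (simp add: bf_def Edefs)
    then show ?thesis using E_VV by blast
  next
    assume "k6 x \<noteq> 0" then have "bf x E6 \<noteq> 0" using bnz gnz by (simp add: bf_def Edefs)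
    then show ?thesis using E_VV by blast
  next
    assume "k7 x \<noteq> 0" then have "bf x E7 \<noteq> 0" using anz bnz gnz by (simp add: bf_def Edefs)
    then show ?thesis using E_VV by blast
  qed
qed

lemma V2':
  assumes "x \<in> VV" "x \<noteq> 0" shows "\<exists>w\<in>VV. bf x w = 1"
proof -
  obtain w where w: "w \<in> VV" "bf x w \<noteq> 0" using V2[OF assms] by blast
  then have "oct_scale (inverse (bf x w)) w \<in> VV" "bf x (oct_scale (inverse (bf x w)) w) = 1"
    by simp_all
  then show ?thesis by blast
qed

lemma V3:
  assumes "x \<in> VV" "y \<in> VV" "ind2 x y"
  shows "\<exists>w\<in>VV. bf x w = 1 \<and> bf y w = 0"
proof -
  have ny: "y \<noteq> 0" using ind2_nz[OF assms(3)] by blast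
  obtain w1 where w1: "w1 \<in> VV" "bf y w1 = 1" using V2'[OF assms(2) ny] by blast
  define x' where "x' = x - oct_scale (bf x w1) y"
  have x'VV: "x' \<in> VV" using assms by (simp add: x'_def)
  have "x' \<noteq> 0"
  proof
    assume "x' = 0"
    then have "oct_scale 1 x + oct_scale (- bf x w1) y = 0" by (simp add: x'_def scale_simps)
    then have "(1::'a) = 0 \<and> - bf x w1 = 0" using assms(3) unfolding ind2_def by blast
    then show False by simp
  qed
  obtain w2 where w2: "w2 \<in> VV" "bf x' w2 = 1" using V2'[OF x'VV \<open>x' \<noteq> 0\<close>] by blast
  define w where "w = w2 - oct_scale (bf y w2) w1"
  have "w \<in> VV" using w1 w2 by (simp add: w_def)
  moreover have "bf y w = 0" using w1 by (simp add: w_def)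
  moreover have "bf x w = 1"
  proof -
    have "bf x w = bf x w2 - bf y w2 * bf x w1" by (simp add: w_def)
    also have "\<dots> = bf x' w2" by (simp add: x'_def algebra_simps bf_sym)
    finally show ?thesis using w2 by simp
  qed
  ultimately show ?thesis by blast
qed

lemma Deg:
  assumes VV: "x \<in> VV" "y \<in> VV" and ind: "ind2 x y" and e: "cr x y = oct_scale b x + oct_scale c y"
  shows "c * c = - bf x x \<and> b * b = - bf y y \<and> bf x y = b * c"
proof -
  have 1: "cr x (cr x y) = oct_scale (c*b) x + oct_scale (c*c) y"
    by (simp add: e oct_eq_iff algebra_simps)
  have "bf x y = c * b \<and> - bf x x = c * c"
    using ind2_coef[OF ind, of "bf x y" "- bf x x" "c*b" "c*c"] K'[OF VV] 1 by simp
  moreover have 2: "cr y (cr x y) = oct_scale (-(b*b)) x + oct_scale (-(b*c)) y"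
    by (simp add: e cr_anti[of y x] oct_eq_iff algebra_simps)
  have "bf y y = -(b*b) \<and> - bf x y = -(b*c)"
    using ind2_coef[OF ind, of "bf y y" "- bf x y" "-(b*b)" "-(b*c)"] K2[OF VV] 2 by simp
  ultimately show ?thesis by (simp add: mult.commute)
qed

lemma neg_self_s: assumes "- a = (a::'a)" shows "a = 0"
proof -
  have "a + a = a + - a" using assms by simp
  then have "a + a = 0 + 0" by simp
  then show ?thesis by (rule two_cancel_s)
qed

lemma neg_self: "- x = (x::'a oct) \<Longrightarrow> x = 0"
  unfolding oct_eq_iff by (auto intro: neg_self_s)

lemma Key2:
  assumes VV: "p \<in> VV" "b \<in> VV" "c \<in> VV" and np: "bf p p = -1" and ind: "ind2 b c"
    and pb: "cr p b = b" and pc: "cr p c = c" and bc: "cr b c = 0"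
  shows False
proof -
  obtain x0 where x0: "x0 \<in> VV" "bf b x0 = 1" "bf c x0 = 0" using V3[OF VV(2,3) ind] by blast
  have bbp: "bf b p = 0" using bf_cr_self(1)[of p b] pb by simp
  have bcp: "bf c p = 0" using bf_cr_self(1)[of p c] pc by simp
  define x1 where "x1 = x0 + oct_scale (bf p x0) p"
  have x1VV: "x1 \<in> VV" using x0 VV by (simp add: x1_def)
  have px1: "bf p x1 = 0" using np by (simp add: x1_def)
  have bx1: "bf b x1 = 1" using x0 bbp by (simp add: x1_def)
  have cx1: "bf c x1 = 0" using x0 bcp by (simp add: x1_def)
  define x' where "x' = x1 - cr p x1"
  have x'VV: "x' \<in> VV" using x1VV by (simp add: x'_def)
  have ppx1: "cr p (cr p x1) = x1" using K'[OF VV(1) x1VV] px1 np by (simp add: scale_simps)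
  have px': "cr p x' = - x'" by (simp add: x'_def ppx1)
  have bpx1: "bf b (cr p x1) = - bf b x1"
  proof -
    have "bf b (cr p x1) = bf (cr b p) x1" by (rule cyc[symmetric])
    also have "\<dots> = bf (- b) x1" using pb cr_anti[of b p] by simp
    finally show ?thesis by simp
  qed
  have cpx1: "bf c (cr p x1) = - bf c x1"
  proof -
    have "bf c (cr p x1) = bf (cr c p) x1" by (rule cyc[symmetric])
    also have "\<dots> = bf (- c) x1" using pc cr_anti[of c p] by simp
    finally show ?thesis by simp
  qed
  have bx': "bf b x' = 2" using bx1 bpx1 by (simp add: x'_def)
  have cx': "bf c x' = 0" using cx1 cpx1 by (simp add: x'_def)
  have crcx: "cr c x' = 0" using Opp[OF VV(1,3) x'VV pc px'] cx' by (simp add: scale_simps)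
  have bfbc: "bf b c = 0"
  proof -
    have "bf b c = bf (cr p b) c" using pb by simp
    also have "\<dots> = bf p (cr b c)" by (rule cyc)
    finally show ?thesis using bc by simp
  qed
  have "Phi b c x' = Phi x' b c" using Phi_cyc[OF VV(2,3) x'VV] .
  moreover have "Phi b c x' = - oct_scale 2 c" using crcx bx' bfbc by (simp add: Phi_def scale_simps)
  moreover have "Phi x' b c = oct_scale 2 c" using bc cx' bx' by (simp add: Phi_def bf_sym scale_simps)
  ultimately have "- oct_scale 2 c = oct_scale 2 c" by simp
  then have "oct_scale 2 c = 0" by (rule neg_self)
  then have "c = 0" using two by simp
  then show False using ind2_nz[OF ind] by simp
qed

end

context octo
begin

lemma span_intros:
  "x \<in> S \<Longrightarrow> x \<in> OVS.span S"
  "x \<in> OVS.span S \<Longrightarrow> y \<in> OVS.span S \<Longrightarrow> x + y \<in> OVS.span S"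
  "x \<in> OVS.span S \<Longrightarrow> y \<in> OVS.span S \<Longrightarrow> x - y \<in> OVS.span S"
  "x \<in> OVS.span S \<Longrightarrow> oct_scale c x \<in> OVS.span S"
  "x \<in> OVS.span S \<Longrightarrow> - x \<in> OVS.span S"
  "0 \<in> OVS.span S"
  by (simp_all add: OVS.span_base OVS.span_add OVS.span_diff OVS.span_scale OVS.span_neg OVS.span_zero)

lemma DegCase:
  assumes VV: "x \<in> VV" "y \<in> VV" and ind: "ind2 x y" and inspan: "cr x y \<in> OVS.span {x, y}"
  shows "\<exists>u v. u \<in> OVS.span {x, y} \<and> v \<in> OVS.span {x, y} \<and> ind2 u v \<and> bf u u = 0 \<and> bf u v = 0"
proof -
  obtain b c where e: "cr x y = oct_scale b x + oct_scale c y" using inspan in_span2 by blast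
  have D: "c * c = - bf x x" "b * b = - bf y y" "bf x y = b * c" using Deg[OF VV ind e] by auto
  have D': "bf x x = - (c * c)" "bf y y = - (b * b)" "bf x y = b * c" "bf y x = b * c"
    using D bf_sym[of y x] by auto
  have xin: "x \<in> OVS.span {x, y}" and yin: "y \<in> OVS.span {x, y}" by (auto intro: OVS.span_base)
  show ?thesis
  proof (cases "b = 0 \<and> c = 0")
    case True
    then have "bf x x = 0" "bf x y = 0" using D' by auto
    then show ?thesis using xin yin ind by blast
  next
    case False
    note nbc = this
    define u where "u = oct_scale b x + oct_scale c y"
    have uin: "u \<in> OVS.span {x, y}" unfolding u_def in_span2 by blast
    have bux: "bf u x = 0" unfolding u_def by (simp add: D' algebra_simps)
    have buy: "bf u y = 0" unfolding u_def by (simp add: D' algebra_simps)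
    have "bf u u = b * bf u x + c * bf u y" unfolding u_def by (simp add: bf_sym algebra_simps)
    then have buu: "bf u u = 0" using bux buy by simp
    show ?thesis
    proof (cases "b = 0")
      case False
      have "ind2 u y"
        unfolding ind2_def
      proof (intro allI impI)
        fix a d assume h: "oct_scale a u + oct_scale d y = 0"
        have "oct_scale (a*b) x + oct_scale (a*c + d) y = oct_scale a u + oct_scale d y"
          by (simp add: u_def oct_eq_iff algebra_simps)
        then have "oct_scale (a*b) x + oct_scale (a*c + d) y = 0" using h by simp
        then have "a*b = 0 \<and> a*c + d = 0" using ind unfolding ind2_def by blast
        then show "a = 0 \<and> d = 0" using False by auto
      qed
      then show ?thesis using uin yin buu buy by blast
    next
      case True
      then have c0: "c \<noteq> 0" using nbc by simp
      have "ind2 u x"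
        unfolding ind2_def
      proof (intro allI impI)
        fix a d assume h: "oct_scale a u + oct_scale d x = 0"
        have "oct_scale (a*b + d) x + oct_scale (a*c) y = oct_scale a u + oct_scale d x"
          by (simp add: u_def oct_eq_iff algebra_simps)
        then have "oct_scale (a*b + d) x + oct_scale (a*c) y = 0" using h by simp
        then have "a*b + d = 0 \<and> a*c = 0" using ind unfolding ind2_def by blast
        then show "a = 0 \<and> d = 0" using True c0 by auto
      qed
      then show ?thesis using uin xin buu bux by blast
    qed
  qed
qed

lemma CoverDeg:
  assumes VV: "u \<in> VV" "v \<in> VV" and ind: "ind2 u v" and nu: "bf u u = 0" and buv: "bf u v = 0"
    and inspan: "cr u v \<in> OVS.span {u, v}"
  shows "\<exists>U. isblock U \<and> OVS.span {u, v} \<subseteq> U"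
proof -
  obtain b c where e: "cr u v = oct_scale b u + oct_scale c v" using inspan in_span2 by blast
  have D: "c * c = - bf u u" "b * b = - bf v v" "bf u v = b * c" using Deg[OF VV ind e] by auto
  have c0: "c = 0" using D(1) nu by simp
  have unz: "u \<noteq> 0" "v \<noteq> 0" using ind2_nz[OF ind] by auto
  show ?thesis
  proof (cases "b = 0")
    case True
    have cuv: "cr u v = 0" using e True c0 by (simp add: scale_simps)
    have cvu: "cr v u = 0" using cuv cr_anti[of v u] by simp
    obtain w where w: "w \<in> VV" "bf u w = 1" "bf v w = 0" using V3[OF VV ind] by blast
    define z where "z = cr u w"
    have zVV: "z \<in> VV" by (simp add: z_def)
    have zu: "cr z u = - u"
    proof -
      have "cr z u = - cr u (cr u w)" by (simp add: z_def cr_anti[of "cr u w" u])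
      also have "\<dots> = - u" using K'[OF VV(1) w(1)] w(2) nu by (simp add: scale_simps)
      finally show ?thesis .
    qed
    have vz: "cr v z = - v"
    proof -
      have "Phi v u w = Phi w v u" using Phi_cyc[OF VV(2,1) w(1)] .
      moreover have "Phi v u w = cr v z" using w buv by (simp add: Phi_def z_def bf_sym scale_simps)
      moreover have "Phi w v u = - v" using w cvu by (simp add: Phi_def bf_sym scale_simps)
      ultimately show ?thesis by simp
    qed
    have znot: "z \<notin> OVS.span {u, v}"
    proof
      assume "z \<in> OVS.span {u, v}"
      then obtain a d where zd: "z = oct_scale a u + oct_scale d v" using in_span2 by blast
      have "cr z u = 0" by (simp add: zd cvu scale_simps)
      with zu unz show False by simp
    qed
    have blk: "isblock (OVS.span {u, v, z})"
    proof (rule block_span3[OF VV zVV ind znot])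
      show "cr u v \<in> OVS.span {u, v, z}" using cuv by (simp add: span_intros)
      have "cr u z = u" using zu cr_anti[of u z] by simp
      then show "cr u z \<in> OVS.span {u, v, z}" by (simp add: span_intros)
      show "cr v z \<in> OVS.span {u, v, z}" using vz by (simp add: span_intros)
    qed
    have "OVS.span {u, v} \<subseteq> OVS.span {u, v, z}" by (rule OVS.span_mono) auto
    then show ?thesis using blk by blast
  next
    case False
    define v' where "v' = oct_scale (inverse b) v"
    have v'VV: "v' \<in> VV" using VV by (simp add: v'_def)
    have uv': "cr u v' = u" using e c0 False by (simp add: v'_def scale_simps)
    have v'u: "cr v' u = - u" using uv' cr_anti[of v' u] by simp
    have bvv: "bf v v = - (b * b)" using D(2) by simp
    have nv': "bf v' v' = -1" using False by (simp add: v'_def bvv field_simps)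
    have buv': "bf u v' = 0" using buv by (simp add: v'_def)
    have ind': "ind2 u v'"
      unfolding ind2_def
    proof (intro allI impI)
      fix a d assume h: "oct_scale a u + oct_scale d v' = 0"
      then have "oct_scale a u + oct_scale (d * inverse b) v = 0" by (simp add: v'_def scale_simps mult.commute)
      then have "a = 0 \<and> d * inverse b = 0" using ind unfolding ind2_def by blast
      then show "a = 0 \<and> d = 0" using False by simp
    qed
    obtain w where w: "w \<in> VV" "bf u w \<noteq> 0" using V2[OF VV(1) unz(1)] by blast
    define w' where "w' = w + oct_scale (bf v' w) v'"
    have w'VV: "w' \<in> VV" using w v'VV by (simp add: w'_def)
    have bvw': "bf v' w' = 0" using nv' by (simp add: w'_def)
    have buw': "bf u w' = bf u w" using buv' by (simp add: w'_def)
    define z where "z = w' + cr v' w'"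
    have zVV: "z \<in> VV" using w'VV by (simp add: z_def)
    have vvw: "cr v' (cr v' w') = w'" using K'[OF v'VV w'VV] bvw' nv' by (simp add: scale_simps)
    have vz: "cr v' z = z" by (simp add: z_def vvw add.commute)
    have znz: "z \<noteq> 0"
    proof
      assume "z = 0"
      then have "cr v' w' = - w'" unfolding z_def by (simp add: add_eq_0_iff)
      then have 1: "bf u (cr v' w') = - bf u w'" by simp
      have "bf u (cr v' w') = bf (cr u v') w'" by (rule cyc[symmetric])
      then have "bf u (cr v' w') = bf u w'" using uv' by simp
      with 1 have "- bf u w' = bf u w'" by simp
      then have "bf u w' = 0" by (rule neg_self_s)
      with buw' w(2) show False by simp
    qed
    have zu: "cr z u = oct_scale (- bf z u) v'" using Opp[OF v'VV zVV VV(1) vz v'u] .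
    have znot: "z \<notin> OVS.span {u, v'}"
    proof
      assume "z \<in> OVS.span {u, v'}"
      then obtain a d where zd: "z = oct_scale a u + oct_scale d v'" using in_span2 by blast
      have "cr v' z = - oct_scale a u" by (simp add: zd v'u scale_simps)
      then have "oct_scale a u + oct_scale d v' = oct_scale (-a) u + oct_scale 0 v'"
        using vz zd by (simp add: scale_simps)
      then have "a = -a \<and> d = 0" using ind2_coef[OF ind'] by blast
      then have "a = 0" "d = 0" using neg_self_s[of a] by auto
      then have "z = 0" using zd by (simp add: scale_simps)
      with znz show False by simp
    qed
    have blk: "isblock (OVS.span {u, v', z})"
    proof (rule block_span3[OF VV(1) v'VV zVV ind' znot])
      show "cr u v' \<in> OVS.span {u, v', z}" using uv' by (simp add: span_intros)
      have "cr u z = oct_scale (bf z u) v'" using zu cr_anti[of u z] by (simp add: scale_simps)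
      then show "cr u z \<in> OVS.span {u, v', z}" by (simp add: span_intros)
      show "cr v' z \<in> OVS.span {u, v', z}" using vz by (simp add: span_intros)
    qed
    have "v = oct_scale b v'" using False by (simp add: v'_def scale_simps)
    then have "v \<in> OVS.span {u, v', z}" by (simp add: span_intros)
    then have "OVS.span {u, v} \<subseteq> OVS.span {u, v', z}"
      by (intro OVS.span_minimal) (auto simp: span_intros)
    then show ?thesis using blk by blast
  qed
qed

lemma span2_closed:
  assumes "cr x y \<in> OVS.span {x, y}" "a \<in> OVS.span {x, y}" "b \<in> OVS.span {x, y}"
  shows "cr a b \<in> OVS.span {x, y}"
proof (rule span_cr_closed[OF _ assms(2,3)])
  have n: "cr y x \<in> OVS.span {x, y}" using span_intros(5)[OF assms(1)] cr_anti[of y x] by simp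
  fix s t assume "s \<in> {x, y}" "t \<in> {x, y}"
  then show "cr s t \<in> OVS.span {x, y}" using assms(1) n by (auto simp: span_intros)
qed

lemma cover:
  assumes W: "OVS.subspace W" "W \<subseteq> VV" "OVS.dim W = 2"
  shows "\<exists>U. isblock U \<and> W \<subseteq> U"
proof -
  obtain x y where xy: "x \<in> W" "y \<in> W" "ind2 x y" "W = OVS.span {x, y}" using sub2[OF W(1,3)] by blast
  have VV: "x \<in> VV" "y \<in> VV" using xy W(2) by auto
  show ?thesis
  proof (cases "cr x y \<in> OVS.span {x, y}")
    case False
    have "isblock (OVS.span {x, y, cr x y})"
    proof (rule block_span3[OF VV VV_simps(2) xy(3) False])
      show "cr x y \<in> OVS.span {x, y, cr x y}" by (simp add: span_intros)
      show "cr x (cr x y) \<in> OVS.span {x, y, cr x y}" using K'[OF VV] by (simp add: span_intros)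
      show "cr y (cr x y) \<in> OVS.span {x, y, cr x y}" using K2[OF VV] by (simp add: span_intros)
    qed
    moreover have "W \<subseteq> OVS.span {x, y, cr x y}" unfolding xy(4) by (rule OVS.span_mono) auto
    ultimately show ?thesis by blast
  next
    case True
    obtain u v where uv: "u \<in> OVS.span {x, y}" "v \<in> OVS.span {x, y}" "ind2 u v" "bf u u = 0" "bf u v = 0"
      using DegCase[OF VV xy(3) True] by blast
    have uvVV: "u \<in> VV" "v \<in> VV" using uv(1,2) xy(4) W(2) by auto
    have Weq: "W = OVS.span {u, v}" using sub2_eq[OF W(1,3)] uv xy(4) by blast
    have "cr u v \<in> OVS.span {u, v}" using span2_closed[OF True uv(1,2)] xy(4) Weq by simp
    then show ?thesis using CoverDeg[OF uvVV uv(3,4,5)] Weq by blast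
  qed
qed

end

lemma solve3: "(z::'a::field) \<noteq> 0 \<Longrightarrow> x*a + y*b + z*c = 0 \<Longrightarrow> c = (-x/z)*a + (-y/z)*b"
  by (simp add: field_simps) (metis add_eq_0_iff)

context octo
begin

lemma ind3:
  assumes ind: "ind2 a b" and nc: "c \<notin> OVS.span {a, b}"
    and h: "oct_scale x a + oct_scale y b + oct_scale z c = 0"
  shows "x = 0 \<and> y = 0 \<and> z = 0"
proof -
  have z: "z = 0"
  proof (rule ccontr)
    assume z: "z \<noteq> 0"
    have "oct_scale z c = - (oct_scale x a + oct_scale y b)" using h by (simp only: add_eq_0_iff)
    then have "oct_scale (inverse z) (oct_scale z c) = oct_scale (inverse z) (- (oct_scale x a + oct_scale y b))"
      by simp
    then have "c = oct_scale (- (inverse z * x)) a + oct_scale (- (inverse z * y)) b"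
      using z by (simp add: scale_simps)
    then have "c \<in> OVS.span {a, b}" unfolding in_span2 by blast
    with nc show False by simp
  qed
  with h have "oct_scale x a + oct_scale y b = 0" by (simp add: scale_simps)
  with ind z show ?thesis unfolding ind2_def by blast
qed

lemma block_unique:
  assumes "isblock U" "x \<in> U" "y \<in> U" "ind2 x y" "cr x y \<notin> OVS.span {x, y}"
  shows "U = OVS.span {x, y, cr x y}"
  using sub3_eq[of U x y "cr x y"] assms unfolding isblock_def by blast

lemma DegEq:
  assumes VV: "x \<in> VV" "y \<in> VV" and ind: "ind2 x y" and inspan: "cr x y \<in> OVS.span {x, y}"
  shows "\<exists>b c. cr x y = oct_scale b x + oct_scale c y \<and> c * c = - bf x x \<and> b * b = - bf y y \<and> bf x y = b * c"
proof -
  obtain b c where e: "cr x y = oct_scale b x + oct_scale c y" using inspan in_span2 by blast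
  then show ?thesis using Deg[OF VV ind e] by blast
qed

lemma Dsq:
  assumes VV: "x \<in> VV" "y \<in> VV" and ind: "ind2 x y" and inspan: "cr x y \<in> OVS.span {x, y}"
  shows "bf x y * bf x y = bf x x * bf y y"
proof -
  obtain b c where "c * c = - bf x x" "b * b = - bf y y" "bf x y = b * c"
    using DegEq[OF assms] by blast
  then have "bf x x = - (c * c)" "bf y y = - (b * b)" "bf x y = b * c" by auto
  then show ?thesis by (simp add: algebra_simps)
qed

lemma Mgen:
  assumes blk: "isblock U"
  shows "\<exists>x y. x \<in> U \<and> y \<in> U \<and> ind2 x y \<and> cr x y \<notin> OVS.span {x, y}"
proof (rule ccontr)
  assume "\<not> ?thesis"
  then have A: "\<And>x y. x \<in> U \<Longrightarrow> y \<in> U \<Longrightarrow> ind2 x y \<Longrightarrow> cr x y \<in> OVS.span {x, y}" by blast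
  from blk have U: "OVS.subspace U" "U \<subseteq> VV" "OVS.dim U = 3" "\<And>x y. x\<in>U \<Longrightarrow> y\<in>U \<Longrightarrow> cr x y \<in> U"
    by (auto simp: isblock_def)
  have coef: "\<exists>b c. cr x y = oct_scale b x + oct_scale c y \<and> c * c = - bf x x \<and> b * b = - bf y y \<and> bf x y = b * c"
    if "x \<in> U" "y \<in> U" "ind2 x y" for x y
    using DegEq[of x y] A[OF that] that U(2) by blast
  have dsq: "bf x y * bf x y = bf x x * bf y y" if "x \<in> U" "y \<in> U" "ind2 x y" for x y
    using Dsq[of x y] A[OF that] that U(2) by blast
  show False
  proof (cases "\<exists>t\<in>U. bf t t \<noteq> 0")
    case True
    then obtain t where t: "t \<in> U" "bf t t \<noteq> 0" by blast
    have tVV: "t \<in> VV" using t U(2) by blast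
    define R where "R = {x \<in> U. bf t x = 0}"
    have Rsub: "OVS.subspace R"
      unfolding OVS.subspace_def R_def using U(1)
      by (auto simp: OVS.subspace_0 OVS.subspace_add OVS.subspace_scale)
    have "U \<subseteq> OVS.span (insert t R)"
    proof
      fix x assume x: "x \<in> U"
      define k where "k = bf t x / bf t t"
      have "x - oct_scale k t \<in> R"
        unfolding R_def using x t U(1) by (auto simp: k_def OVS.subspace_diff OVS.subspace_scale)
      then have "x - oct_scale k t \<in> OVS.span R" by (rule OVS.span_base)
      then show "x \<in> OVS.span (insert t R)" unfolding OVS.span_breakdown_eq by blast
    qed
    then have "OVS.dim U \<le> OVS.dim (insert t R)" by (rule OV.dim_mono)
    moreover have "OVS.dim (insert t R) \<le> OVS.dim R + 1" using OV.dim_insert[of t R] by (simp split: if_splits)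
    ultimately have "OVS.dim R \<ge> 2" using U(3) by simp
    then obtain a b where ab: "a \<in> R" "b \<in> R" "ind2 a b" using dim_ge2_ind2[OF Rsub] by blast
    have RU: "r \<in> U" "bf t r = 0" if "r \<in> R" for r using that by (auto simp: R_def)
    have indt: "ind2 t r" if r: "r \<in> R" "r \<noteq> 0" for r
      unfolding ind2_def
    proof (intro allI impI)
      fix s q assume h: "oct_scale s t + oct_scale q r = 0"
      have "bf t (oct_scale s t + oct_scale q r) = 0" using h by simp
      then have "s * bf t t = 0" using RU[OF r(1)] by simp
      then have "s = 0" using t(2) by simp
      with h have "oct_scale q r = 0" by (simp add: scale_simps)
      then show "s = 0 \<and> q = 0" using \<open>s = 0\<close> r(2) by simp
    qed
    have nR: "bf r r = 0" if r: "r \<in> R" "r \<noteq> 0" for r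
    proof -
      have "bf t r * bf t r = bf t t * bf r r" using dsq[OF t(1) RU(1)[OF r(1)] indt[OF r]] .
      then show ?thesis using RU(2)[OF r(1)] t(2) by simp
    qed
    have eig: "\<exists>g. cr t r = oct_scale g r \<and> g * g = - bf t t" if r: "r \<in> R" "r \<noteq> 0" for r
    proof -
      obtain b c where bc: "cr t r = oct_scale b t + oct_scale c r" "c * c = - bf t t" "b * b = - bf r r"
        using coef[OF t(1) RU(1)[OF r(1)] indt[OF r]] by blast
      then have "b = 0" using nR[OF r] by simp
      then show ?thesis using bc by (auto simp: scale_simps)
    qed
    have nz: "a \<noteq> 0" "b \<noteq> 0" using ind2_nz[OF ab(3)] by auto
    have abR: "a + b \<in> R" using ab Rsub by (simp add: OVS.subspace_add)
    have abnz: "a + b \<noteq> 0"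
    proof
      assume "a + b = 0"
      then have "oct_scale 1 a + oct_scale 1 b = 0" by (simp add: scale_simps)
      then have "(1::'a) = 0" using ab(3) unfolding ind2_def by blast
      then show False by simp
    qed
    obtain ga where ga: "cr t a = oct_scale ga a" "ga * ga = - bf t t" using eig[OF ab(1) nz(1)] by blast
    obtain gb where gb: "cr t b = oct_scale gb b" "gb * gb = - bf t t" using eig[OF ab(2) nz(2)] by blast
    obtain gab where gab: "cr t (a + b) = oct_scale gab (a + b)" using eig[OF abR abnz] by blast
    have "oct_scale ga a + oct_scale gb b = oct_scale gab a + oct_scale gab b"
      using gab ga gb by (simp add: scale_simps)
    then have "ga = gab \<and> gb = gab" using ind2_coef[OF ab(3)] by blast
    then have gbga: "gb = ga" by simp
    have ganz: "ga \<noteq> 0" using ga(2) t(2) by auto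
    have aU: "a \<in> U" "b \<in> U" using RU ab by auto
    have abVV: "a \<in> VV" "b \<in> VV" using aU U(2) by auto
    have nab: "bf a b = 0"
    proof -
      have "bf a b * bf a b = bf a a * bf b b" using dsq[OF aU ab(3)] .
      then show ?thesis using nR[OF ab(1) nz(1)] by simp
    qed
    have crab: "cr a b = 0"
    proof -
      obtain b' c' where bc: "cr a b = oct_scale b' a + oct_scale c' b" "c' * c' = - bf a a" "b' * b' = - bf b b"
        using coef[OF aU ab(3)] by blast
      then have "b' = 0" "c' = 0" using nR[OF ab(1) nz(1)] nR[OF ab(2) nz(2)] by auto
      then show ?thesis using bc(1) by (simp add: scale_simps)
    qed
    define p where "p = oct_scale (inverse ga) t"
    have pVV: "p \<in> VV" using tVV by (simp add: p_def)
    have pa: "cr p a = a" using ga ganz by (simp add: p_def scale_simps)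
    have pb: "cr p b = b" using gb gbga ganz by (simp add: p_def scale_simps)
    have np: "bf p p = -1"
    proof -
      have "bf p p = inverse ga * inverse ga * bf t t" by (simp add: p_def)
      also have "bf t t = - (ga * ga)" using ga(2) by simp
      finally show ?thesis using ganz by (simp add: field_simps)
    qed
    show False using Key2[OF pVV abVV np ab(3) pa pb crab] .
  next
    case False
    then have n0: "\<And>t. t \<in> U \<Longrightarrow> bf t t = 0" by blast
    have b0: "bf x y = 0" if "x \<in> U" "y \<in> U" for x y
    proof -
      have "x + y \<in> U" using that U(1) by (simp add: OVS.subspace_add)
      then have "bf (x + y) (x + y) = 0" by (rule n0)
      then have "bf x y + bf x y = 0 + 0" using n0[OF that(1)] n0[OF that(2)] by (simp add: bf_sym)
      then show ?thesis by (rule two_cancel_s)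
    qed
    have c0: "cr x y = 0" if xy: "x \<in> U" "y \<in> U" "ind2 x y" for x y
    proof -
      obtain b c where bc: "cr x y = oct_scale b x + oct_scale c y" "c * c = - bf x x" "b * b = - bf y y"
        using coef[OF xy] by blast
      then have "b = 0" "c = 0" using n0 xy by auto
      then show ?thesis using bc(1) by (simp add: scale_simps)
    qed
    obtain B where B: "B \<subseteq> U" "OVS.independent B" "U \<subseteq> OVS.span B" "card B = OVS.dim U"
      using OVS.basis_exists by blast
    then have "card B = 3" using U(3) by simp
    then obtain a b c where abc: "B = {a, b, c}" "a \<noteq> b" "b \<noteq> c" "a \<noteq> c"
      unfolding card_3_iff by blast
    have iab: "OVS.independent {a, b}"
      by (rule OVS.independent_mono[OF B(2)]) (auto simp: abc(1))
    have indab: "ind2 a b" by (rule indep_ind2[OF iab abc(2)])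
    have Bins: "insert c {a, b} = B" using abc(1) by auto
    have iins: "OVS.independent (insert c {a, b})" by (subst Bins) (rule B(2))
    have cab: "c \<notin> {a, b}" using abc by auto
    have cnot: "c \<notin> OVS.span {a, b}"
    proof
      assume cin: "c \<in> OVS.span {a, b}"
      have "OVS.independent (insert c {a, b}) = (OVS.independent {a, b} \<and> c \<notin> OVS.span {a, b})"
        using OVS.independent_insert[of c "{a, b}"] cab by (simp only: if_False)
      then show False using iins cin by blast
    qed
    have abcU: "a \<in> U" "b \<in> U" "c \<in> U" using B(1) abc(1) by auto
    have abcVV: "a \<in> VV" "b \<in> VV" "c \<in> VV" using abcU U(2) by auto
    obtain w where w: "w \<in> VV" "bf a w = 1" "bf b w = 0" using V3[OF abcVV(1,2) indab] by blast
    define p where "p = cr a w"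
    have pVV: "p \<in> VV" by (simp add: p_def)
    have np: "bf p p = -1" using bf_crcr[OF abcVV(1) w(1) w(1)] n0[OF abcU(1)] w(2) by (simp add: p_def)
    have indba: "ind2 b a" using ind2_sym[OF indab] .
    have indca: "ind2 c a"
      unfolding ind2_def
    proof (intro allI impI)
      fix s q assume "oct_scale s c + oct_scale q a = 0"
      then have "oct_scale q a + oct_scale 0 b + oct_scale s c = 0" by (simp add: scale_simps add.commute)
      then show "s = 0 \<and> q = 0" using ind3[OF indab cnot] by blast
    qed
    have cba: "cr b a = 0" using c0[OF abcU(2,1) indba] .
    have cca: "cr c a = 0" using c0[OF abcU(3,1) indca] .
    have pa: "cr p a = - a"
    proof -
      have "cr p a = - cr a (cr a w)" by (simp add: p_def cr_anti[of "cr a w" a])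
      also have "\<dots> = - a" using K'[OF abcVV(1) w(1)] w(2) n0[OF abcU(1)] by (simp add: scale_simps)
      finally show ?thesis .
    qed
    have pb: "cr p b = b"
    proof -
      have "Phi b a w = Phi w b a" using Phi_cyc[OF abcVV(2,1) w(1)] .
      moreover have "Phi b a w = cr b p" using w b0[OF abcU(2,1)] by (simp add: Phi_def p_def bf_sym scale_simps)
      moreover have "Phi w b a = - b" using w cba by (simp add: Phi_def bf_sym scale_simps)
      ultimately have "cr b p = - b" by simp
      then show ?thesis using cr_anti[of p b] by simp
    qed
    define s where "s = bf c w"
    define c' where "c' = c - oct_scale s a"
    have cp: "cr c p = oct_scale s a + oct_scale s a - c"
    proof -
      have "Phi c a w = Phi w c a" using Phi_cyc[OF abcVV(3,1) w(1)] .
      moreover have "Phi c a w = cr c p - oct_scale s a" using b0[OF abcU(3,1)]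
        by (simp add: Phi_def p_def s_def scale_simps)
      moreover have "Phi w c a = oct_scale s a - c" using w cca by (simp add: Phi_def s_def bf_sym scale_simps)
      ultimately have "cr c p - oct_scale s a = oct_scale s a - c" by simp
      then show ?thesis by (simp add: algebra_simps diff_eq_eq)
    qed
    have pc': "cr p c' = c'"
    proof -
      have "cr p c' = cr p c - oct_scale s (cr p a)" by (simp add: c'_def)
      also have "cr p c = - cr c p" by (rule cr_anti)
      finally show ?thesis using cp pa by (simp add: c'_def scale_simps algebra_simps)
    qed
    have c'U: "c' \<in> U" using abcU U(1) by (simp add: c'_def OVS.subspace_diff OVS.subspace_scale)
    have c'VV: "c' \<in> VV" using c'U U(2) by auto
    have indbc': "ind2 b c'"
      unfolding ind2_def
    proof (intro allI impI)
      fix q r assume h: "oct_scale q b + oct_scale r c' = 0"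
      have "oct_scale (- (r * s)) a + oct_scale q b + oct_scale r c = oct_scale q b + oct_scale r c'"
        by (simp add: c'_def oct_eq_iff algebra_simps)
      then have "oct_scale (- (r * s)) a + oct_scale q b + oct_scale r c = 0" using h by simp
      then have "- (r * s) = 0 \<and> q = 0 \<and> r = 0" using ind3[OF indab cnot] by blast
      then show "q = 0 \<and> r = 0" by simp
    qed
    have bc': "cr b c' = 0" using c0[OF abcU(2) c'U indbc'] .
    show False using Key2[OF pVV abcVV(2) c'VV np indbc' pb pc' bc'] .
  qed
qed

end

context octo
begin

lemma block_nondeg:
  assumes VV: "x \<in> VV" "y \<in> VV" and ind: "ind2 x y" and nin: "cr x y \<notin> OVS.span {x, y}"
  shows "isblock (OVS.span {x, y, cr x y})"
proof (rule block_span3[OF VV VV_simps(2) ind nin])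
  show "cr x y \<in> OVS.span {x, y, cr x y}" by (simp add: span_intros)
  show "cr x (cr x y) \<in> OVS.span {x, y, cr x y}" using K'[OF VV] by (simp add: span_intros)
  show "cr y (cr x y) \<in> OVS.span {x, y, cr x y}" using K2[OF VV] by (simp add: span_intros)
qed

lemma E17_span: "x \<in> VV \<Longrightarrow> x \<in> OVS.span {E1, E2, E3, E4, E5, E6, E7::'a oct}"
proof -
  assume x: "x \<in> VV"
  have "x = oct_scale (k1 x) E1 + oct_scale (k2 x) E2 + oct_scale (k3 x) E3 + oct_scale (k4 x) E4
     + oct_scale (k5 x) E5 + oct_scale (k6 x) E6 + oct_scale (k7 x) E7"
    using x by (simp add: oct_eq_iff Edefs VV_def)
  also have "\<dots> \<in> OVS.span {E1, E2, E3, E4, E5, E6, E7}"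
    by (intro span_intros) auto
  finally show ?thesis .
qed

lemma dimVV: "OVS.dim VV = 7"
proof -
  have VVeq: "VV = OVS.span {E1, E2, E3, E4, E5, E6, E7::'a oct}"
  proof
    show "VV \<subseteq> OVS.span {E1, E2, E3, E4, E5, E6, E7}" using E17_span by blast
    show "OVS.span {E1, E2, E3, E4, E5, E6, E7} \<subseteq> VV"
      by (rule OVS.span_minimal) (auto simp: VV_sub)
  qed
  have ind: "OVS.independent {E1, E2, E3, E4, E5, E6, E7::'a oct}"
    by (rule OVS.independent_mono[OF OB_indep]) (auto simp: OB_def)
  have card: "card {E1, E2, E3, E4, E5, E6, E7::'a oct} = 7" by (simp add: Edefs mk_eq_iff)
  show ?thesis unfolding VVeq using OVS.dim_span_eq_card_independent[OF ind] card by simp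
qed

lemma Kern3: "\<exists>y\<in>VV. y \<noteq> 0 \<and> bf a y = 0 \<and> bf b y = 0 \<and> bf c y = 0"
proof (rule ccontr)
  assume "\<not> ?thesis"
  then have H: "\<And>y. y \<in> VV \<Longrightarrow> bf a y = 0 \<Longrightarrow> bf b y = 0 \<Longrightarrow> bf c y = 0 \<Longrightarrow> y = 0" by blast
  define f where "f y = oct_scale (bf a y) E1 + oct_scale (bf b y) E2 + oct_scale (bf c y) E3" for y
  have lin: "Vector_Spaces.linear oct_scale oct_scale f"
    unfolding Vector_Spaces.linear_iff by (auto simp: f_def oct_vs oct_eq_iff algebra_simps)
  have f0: "bf a y = 0 \<and> bf b y = 0 \<and> bf c y = 0" if "f y = 0" for y
    using that by (simp add: f_def oct_eq_iff Edefs)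
  have spanVV: "OVS.span VV = VV" using VV_sub by simp
  have inj: "inj_on f (OVS.span VV)"
    unfolding spanVV
  proof (rule inj_onI)
    fix x y assume xy: "x \<in> VV" "y \<in> VV" "f x = f y"
    have "f (x - y) = f x - f y" by (simp add: f_def scale_simps algebra_simps)
    then have "f (x - y) = 0" using xy(3) by simp
    then have "x - y = 0" using H[of "x - y"] f0[of "x - y"] xy(1,2) by simp
    then show "x = y" by simp
  qed
  have "OVS.dim (f ` VV) = OVS.dim VV" using OVP.dim_image_eq[OF lin inj] .
  moreover have "f ` VV \<subseteq> OVS.span {E1, E2, E3::'a oct}"
  proof
    fix z assume "z \<in> f ` VV"
    then obtain y where "z = f y" by blast
    then show "z \<in> OVS.span {E1, E2, E3::'a oct}" unfolding in_span3 f_def by blast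
  qed
  then have "OVS.dim (f ` VV) \<le> card {E1, E2, E3::'a oct}" using OVS.dim_le_card by blast
  moreover have "card {E1, E2, E3::'a oct} = 3" by (simp add: Edefs mk_eq_iff)
  ultimately show False using dimVV by simp
qed

lemma conj_im: "oct_conj (x::'a oct) = - x \<longleftrightarrow> k0 x = 0"
proof
  assume "oct_conj x = - x"
  then have "k0 x = - k0 x" by (simp add: oct_eq_iff)
  then have "- k0 x = k0 x" by (rule sym)
  then show "k0 x = 0" by (rule neg_self_s)
next
  assume "k0 x = 0" then show "oct_conj x = - x" by (simp add: oct_eq_iff)
qed

lemma im_of_eq: "im_of (H::'a oct set) = H \<inter> VV"
  by (auto simp: im_of_def VV_def conj_im)

lemma one_notVV: "oct_one \<notin> VV" by (simp add: VV_def)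

lemma mult_VV: "x \<in> VV \<Longrightarrow> y \<in> VV \<Longrightarrow> oct_mult \<alpha> \<beta> \<gamma> x y = oct_scale (- bf x y) oct_one + cr x y"
  by (simp add: mult_decomp VV_def scale_simps)

lemma cr_im: "cr x y = cr (x - oct_scale (k0 x) oct_one) (y - oct_scale (k0 y) oct_one)"
  by (simp add: oct_eq_iff cr_def)

lemma bf_im: "bf x y = bf (x - oct_scale (k0 x) oct_one) (y - oct_scale (k0 y) oct_one)"
  by (simp add: bf_def)

lemma sub_to_block:
  assumes sa: "oct_subalgebra \<alpha> \<beta> \<gamma> H" and d4: "OVS.dim H = 4"
  shows "isblock (im_of H)"
proof -
  have H: "OVS.subspace H" "oct_one \<in> H" "\<And>x y. x\<in>H \<Longrightarrow> y\<in>H \<Longrightarrow> oct_mult \<alpha> \<beta> \<gamma> x y \<in> H"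
    using sa by (auto simp: oct_subalgebra_def)
  let ?U = "H \<inter> VV"
  have U: "OVS.subspace ?U" using H(1) VV_sub by (rule OVS.subspace_inter)
  have decomp: "x - oct_scale (k0 x) oct_one \<in> ?U" if "x \<in> H" for x
    using that H(1,2) by (auto simp: OVS.subspace_diff OVS.subspace_scale VV_def)
  have spanH: "OVS.span (insert oct_one ?U) = H"
  proof (rule OVS.span_subspace)
    show "insert oct_one ?U \<subseteq> H" using H(2) by auto
    show "H \<subseteq> OVS.span (insert oct_one ?U)"
    proof
      fix x assume "x \<in> H"
      then have "x - oct_scale (k0 x) oct_one \<in> OVS.span ?U" using decomp OVS.span_base by blast
      then show "x \<in> OVS.span (insert oct_one ?U)" unfolding OVS.span_breakdown_eq by blast
    qed
    show "OVS.subspace H" by (rule H(1))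
  qed
  have spU: "OVS.span ?U = ?U" using U by simp
  have notin: "oct_one \<notin> OVS.span ?U"
  proof
    assume "oct_one \<in> OVS.span ?U"
    then have "oct_one \<in> ?U" unfolding spU .
    with one_notVV show False by simp
  qed
  have "OVS.dim H = OVS.dim ?U + 1"
  proof -
    have "OVS.dim H = OVS.dim (insert oct_one ?U)" using spanH OVS.dim_span by metis
    also have "\<dots> = OVS.dim ?U + 1" by (subst OV.dim_insert) (simp only: notin if_False)
    finally show ?thesis .
  qed
  then have d3: "OVS.dim ?U = 3" using d4 by simp
  have cl: "cr x y \<in> ?U" if "x \<in> ?U" "y \<in> ?U" for x y
  proof -
    have "cr x y = oct_mult \<alpha> \<beta> \<gamma> x y + oct_scale (bf x y) oct_one"
      using mult_VV[of x y] that by (simp add: scale_simps)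
    moreover have "oct_mult \<alpha> \<beta> \<gamma> x y \<in> H" using H(3) that by blast
    ultimately have "cr x y \<in> H" using H(1,2) by (simp add: OVS.subspace_add OVS.subspace_scale)
    then show ?thesis by simp
  qed
  show ?thesis unfolding isblock_def im_of_eq using U d3 cl by blast
qed

lemma block_to_sub:
  assumes blk: "isblock U"
  shows "oct_subalgebra \<alpha> \<beta> \<gamma> (OVS.span (insert oct_one U)) \<and> OVS.dim (OVS.span (insert oct_one U)) = 4
    \<and> im_of (OVS.span (insert oct_one U)) = U"
proof -
  have U: "OVS.subspace U" "U \<subseteq> VV" "OVS.dim U = 3" "\<And>x y. x\<in>U \<Longrightarrow> y\<in>U \<Longrightarrow> cr x y \<in> U"
    using blk by (auto simp: isblock_def)
  let ?H = "OVS.span (insert oct_one U)"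
  have spanU: "OVS.span U = U" using U(1) by simp
  have memH: "x - oct_scale (k0 x) oct_one \<in> U" if xH: "x \<in> ?H" for x
  proof -
    obtain k where k: "x - oct_scale k oct_one \<in> U" using xH unfolding OVS.span_breakdown_eq spanU by blast
    then have "k0 (x - oct_scale k oct_one) = 0" using U(2) by (auto simp: VV_def)
    then have "k = k0 x" by simp
    then show ?thesis using k by simp
  qed
  have UH: "U \<subseteq> ?H" by (meson OVS.span_mono OVS.span_superset order_trans subset_insertI)
  have oneH: "oct_one \<in> ?H" by (simp add: OVS.span_base)
  have cl: "oct_mult \<alpha> \<beta> \<gamma> x y \<in> ?H" if "x \<in> ?H" "y \<in> ?H" for x y
  proof -
    have "cr (x - oct_scale (k0 x) oct_one) (y - oct_scale (k0 y) oct_one) \<in> U"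
      by (rule U(4)[OF memH[OF that(1)] memH[OF that(2)]])
    then have crU: "cr x y \<in> U" by (simp only: cr_im[symmetric])
    show ?thesis unfolding mult_decomp
      using memH[OF that(1)] memH[OF that(2)] crU UH oneH
      by (intro span_intros) auto
  qed
  have sa: "oct_subalgebra \<alpha> \<beta> \<gamma> ?H"
    unfolding oct_subalgebra_def using oneH cl by simp
  have notin: "oct_one \<notin> OVS.span U"
  proof
    assume "oct_one \<in> OVS.span U"
    then have "oct_one \<in> U" unfolding spanU .
    with U(2) one_notVV show False by auto
  qed
  have "OVS.dim ?H = OVS.dim (insert oct_one U)" by (rule OVS.dim_span)
  also have "\<dots> = OVS.dim U + 1" by (subst OV.dim_insert) (simp only: notin if_False)
  finally have d4: "OVS.dim ?H = 4" using U(3) by simp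
  have im: "im_of ?H = U"
  proof
    show "im_of ?H \<subseteq> U"
    proof
      fix x assume "x \<in> im_of ?H"
      then have x: "x \<in> ?H" "k0 x = 0" by (auto simp: im_of_eq VV_def)
      then show "x \<in> U" using memH[OF x(1)] by (simp add: scale_simps)
    qed
    show "U \<subseteq> im_of ?H" using UH U(2) by (auto simp: im_of_eq)
  qed
  show ?thesis using sa d4 im by blast
qed

lemma blocks_eq: "{im_of H | H. oct_subalgebra \<alpha> \<beta> \<gamma> H \<and> OVS.dim H = 4} = {U. isblock U}"
proof
  show "{im_of H | H. oct_subalgebra \<alpha> \<beta> \<gamma> H \<and> OVS.dim H = 4} \<subseteq> {U. isblock U}"
    using sub_to_block by blast
  show "{U. isblock U} \<subseteq> {im_of H | H. oct_subalgebra \<alpha> \<beta> \<gamma> H \<and> OVS.dim H = 4}"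
  proof
    fix U assume "U \<in> {U. isblock U}"
    then have "isblock U" by simp
    from block_to_sub[OF this] show "U \<in> {im_of H | H. oct_subalgebra \<alpha> \<beta> \<gamma> H \<and> OVS.dim H = 4}"
      by blast
  qed
qed

end

context octo
begin

definition aniso :: bool where "aniso \<longleftrightarrow> (\<forall>x\<in>VV. bf x x = 0 \<longrightarrow> x = 0)"

lemma div_aniso:
  assumes "oct_division \<alpha> \<beta> \<gamma>" shows aniso
  unfolding aniso_def
proof (intro ballI impI)
  fix x assume x: "x \<in> VV" "bf x x = 0"
  have "oct_mult \<alpha> \<beta> \<gamma> x x = 0" using mult_VV[OF x(1) x(1)] x(2) by (simp add: scale_simps)
  then show "x = 0" using assms unfolding oct_division_def by blast
qed

lemma aniso_div:
  assumes an: aniso shows "oct_division \<alpha> \<beta> \<gamma>"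
  unfolding oct_division_def
proof (intro allI impI)
  have A: "\<And>x. x \<in> VV \<Longrightarrow> bf x x = 0 \<Longrightarrow> x = 0" using an unfolding aniso_def by blast
  fix x y assume xy: "oct_mult \<alpha> \<beta> \<gamma> x y = 0"
  show "x = 0 \<or> y = 0"
  proof (rule ccontr)
    assume "\<not> (x = 0 \<or> y = 0)" then have nz: "x \<noteq> 0" "y \<noteq> 0" by auto
    define l where "l = k0 x"
    define m where "m = k0 y"
    define u where "u = x - oct_scale l oct_one"
    define v where "v = y - oct_scale m oct_one"
    have uVV: "u \<in> VV" and vVV: "v \<in> VV" by (simp_all add: u_def v_def l_def m_def VV_def)
    have xu: "x = oct_scale l oct_one + u" and yv: "y = oct_scale m oct_one + v" by (simp_all add: u_def v_def)
    have bfuv: "bf x y = bf u v" using bf_im[of x y] by (simp add: u_def v_def l_def m_def)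
    have cruv: "cr x y = cr u v" using cr_im[of x y] by (simp add: u_def v_def l_def m_def)
    have M: "oct_scale (l * m - bf u v) oct_one + (oct_scale l v + oct_scale m u + cr u v) = 0"
      using xy unfolding mult_decomp bfuv cruv by (simp add: u_def v_def l_def m_def add.assoc)
    have k0M: "l * m - bf u v = 0"
    proof -
      have "k0 (oct_scale (l * m - bf u v) oct_one + (oct_scale l v + oct_scale m u + cr u v)) = 0"
        using M by simp
      then show ?thesis using uVV vVV by (simp add: VV_def cr_def)
    qed
    then have s1: "bf u v = l * m" by simp
    have E: "oct_scale l v + oct_scale m u + cr u v = 0" using M k0M by (simp add: scale_simps)
    then have cuv: "cr u v = - (oct_scale l v + oct_scale m u)" by (simp only: add_eq_0_iff)
    have "cr u (cr u v) = oct_scale (bf u v) u + oct_scale (- bf u u) v" using K'[OF uVV vVV] .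
    moreover have "cr u (cr u v) = - oct_scale l (cr u v)" by (simp add: cuv scale_simps)
    ultimately have EQ: "oct_scale (l * m) u + oct_scale (- bf u u) v = oct_scale l (oct_scale l v + oct_scale m u)"
      using cuv s1 by (simp add: scale_simps)
    have "oct_scale (l * l + bf u u) v
       = oct_scale l (oct_scale l v + oct_scale m u) - (oct_scale (l * m) u + oct_scale (- bf u u) v)"
      by (simp add: oct_eq_iff algebra_simps)
    then have V0: "oct_scale (l * l + bf u u) v = 0" using EQ by simp
    show False
    proof (cases "v = 0")
      case True
      then have "oct_scale m u = 0" using E by simp
      moreover have "m \<noteq> 0" using nz(2) yv True by auto
      ultimately have "u = 0" by simp
      then have "l * m = 0" using s1 by simp
      then have "l = 0" using \<open>m \<noteq> 0\<close> by simp
      then show False using nz(1) xu \<open>u = 0\<close> by simp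
    next
      case False
      then have lnu: "l * l + bf u u = 0" using V0 by simp
      show False
      proof (cases "l = 0")
        case True
        then have "bf u u = 0" using lnu by simp
        then have "u = 0" using A uVV by blast
        then show False using nz(1) xu True by simp
      next
        case False
        define e where "e = oct_scale (inverse l) u"
        have eVV: "e \<in> VV" using uVV by (simp add: e_def)
        have ne: "bf e e = -1"
        proof -
          have "bf e e = inverse l * inverse l * bf u u" by (simp add: e_def)
          also have "bf u u = - (l * l)" using lnu by (simp add: add_eq_0_iff)
          finally show ?thesis using False by (simp add: field_simps)
        qed
        obtain y0 where y0: "y0 \<in> VV" "y0 \<noteq> 0" "bf e y0 = 0" using Kern3[of e e e] by blast
        have ny0: "bf y0 y0 \<noteq> 0" using A y0 by blast
        define z where "z = y0 + cr e y0"
        have zVV: "z \<in> VV" using y0 by (simp add: z_def)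
        have nce: "bf (cr e y0) (cr e y0) = - bf y0 y0" using bf_crcr[OF eVV y0(1) y0(1)] ne y0(3) by simp
        have "bf z z = bf y0 y0 + bf (cr e y0) (cr e y0)" by (simp add: z_def bf_sym)
        then have "bf z z = 0" using nce by simp
        then have "z = 0" using A zVV by blast
        then have "cr e y0 = - y0" unfolding z_def by (simp add: add_eq_0_iff)
        then have "bf (cr e y0) (cr e y0) = bf y0 y0" by simp
        with nce have "- bf y0 y0 = bf y0 y0" by simp
        then have "bf y0 y0 = 0" by (rule neg_self_s)
        with ny0 show False by simp
      qed
    qed
  qed
qed

lemma TN:
  assumes VV: "u \<in> VV" "v \<in> VV" "w \<in> VV" and nu: "bf u u = 0" and buv: "bf u v = 0" and cuv: "cr u v = 0"
  shows "cr (cr u w) u = oct_scale (- bf u w) u"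
    and "cr v (cr u w) = oct_scale (bf v w) u + oct_scale (bf v w) u - oct_scale (bf u w) v"
proof -
  have "cr (cr u w) u = - cr u (cr u w)" by (simp add: cr_anti[of "cr u w" u])
  also have "\<dots> = oct_scale (- bf u w) u" using K'[OF VV(1,3)] nu by (simp add: scale_simps)
  finally show "cr (cr u w) u = oct_scale (- bf u w) u" .
  have cvu: "cr v u = 0" using cuv cr_anti[of v u] by simp
  have "Phi v u w = Phi w v u" using Phi_cyc[OF VV(2,1,3)] .
  moreover have "Phi v u w = cr v (cr u w) - oct_scale (bf v w) u" using buv by (simp add: Phi_def bf_sym)
  moreover have "Phi w v u = oct_scale (bf v w) u - oct_scale (bf u w) v" using cvu by (simp add: Phi_def bf_sym algebra_simps)
  ultimately have "cr v (cr u w) - oct_scale (bf v w) u = oct_scale (bf v w) u - oct_scale (bf u w) v" by simp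
  then show "cr v (cr u w) = oct_scale (bf v w) u + oct_scale (bf v w) u - oct_scale (bf u w) v"
    by (simp add: algebra_simps diff_eq_eq)
qed

lemma two_blocks:
  assumes u: "u \<in> VV" "u \<noteq> 0" "bf u u = 0"
  shows "\<exists>W U1 U2. OVS.subspace W \<and> W \<subseteq> VV \<and> OVS.dim W = 2 \<and> isblock U1 \<and> isblock U2 \<and> U1 \<noteq> U2
     \<and> W \<subseteq> U1 \<and> W \<subseteq> U2"
proof -
  obtain w where w: "w \<in> VV" "bf u w = 1" using V2'[OF u(1,2)] by blast
  define p where "p = cr u w"
  have bpu: "bf p u = 0" by (simp add: p_def)
  have bpw: "bf p w = 0" by (simp add: p_def)
  obtain y where y: "y \<in> VV" "y \<noteq> 0" "bf u y = 0" "bf w y = 0" "bf p y = 0" using Kern3[of u w p] by blast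
  have "\<exists>q. q \<in> VV \<and> bf u q = 0 \<and> cr u q \<notin> OVS.span {u}"
  proof (cases "cr u y \<in> OVS.span {u}")
    case False then show ?thesis using y by blast
  next
    case True
    then obtain lam where lam: "cr u y = oct_scale lam u" by (auto simp: in_span1)
    have "bf (cr u y) w = bf u (cr y w)" by (rule cyc)
    also have "\<dots> = bf (cr y w) u" by (rule bf_sym)
    also have "\<dots> = bf y (cr w u)" by (rule cyc)
    also have "cr w u = - p" by (simp add: p_def cr_anti[of w u])
    finally have "bf (cr u y) w = - bf y p" by simp
    then have "lam = 0" using lam w(2) y(5) by (simp add: bf_sym)
    then have cuy: "cr u y = 0" using lam by (simp add: scale_simps)
    define q where "q = cr y w"
    have qVV: "q \<in> VV" by (simp add: q_def)
    have bfuq: "bf u q = 0"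
    proof -
      have "bf u q = bf (cr u y) w" unfolding q_def by (rule cyc[symmetric])
      then show ?thesis using cuy by simp
    qed
    have "Phi u y w = Phi w u y" using Phi_cyc[OF u(1) y(1) w(1)] .
    moreover have "Phi u y w = cr u q - y" using w(2) y(3) by (simp add: Phi_def q_def scale_simps)
    moreover have "Phi w u y = y" using cuy w(2) y(4) by (simp add: Phi_def bf_sym scale_simps)
    ultimately have uq: "cr u q = y + y" by (simp add: diff_eq_eq)
    have "cr u q \<notin> OVS.span {u}"
    proof
      assume "cr u q \<in> OVS.span {u}"
      then obtain mu where mu: "y + y = oct_scale mu u" using uq by (auto simp: in_span1)
      have "bf (y + y) w = mu * bf u w" using mu by simp
      then have "mu = 0" using y(4) w(2) by (simp add: bf_sym)
      then have "y + y = 0 + 0" using mu by (simp add: scale_simps)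
      then have "y = 0" by (rule two_cancel)
      with y(2) show False by simp
    qed
    then show ?thesis using qVV bfuq by blast
  qed
  then obtain q where q: "q \<in> VV" "bf u q = 0" "cr u q \<notin> OVS.span {u}" by blast
  define v where "v = cr u q"
  have vVV: "v \<in> VV" by (simp add: v_def)
  have nv: "bf v v = 0" using bf_crcr[OF u(1) q(1) q(1)] u(3) q(2) by (simp add: v_def)
  have buv: "bf u v = 0" by (simp add: v_def)
  have cuv: "cr u v = 0" using K'[OF u(1) q(1)] u(3) q(2) by (simp add: v_def scale_simps)
  have ind: "ind2 u v"
    unfolding ind2_def
  proof (intro allI impI)
    fix a b assume h: "oct_scale a u + oct_scale b v = 0"
    show "a = 0 \<and> b = 0"
    proof (cases "b = 0")
      case True
      then show ?thesis using h u(2) by (simp add: scale_simps)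
    next
      case False
      have "oct_scale b v = - oct_scale a u" using h by (simp add: add_eq_0_iff add.commute)
      then have "oct_scale (inverse b) (oct_scale b v) = oct_scale (inverse b) (- oct_scale a u)" by simp
      then have "v = oct_scale (- (inverse b * a)) u" using False by (simp add: scale_simps)
      then have "v \<in> OVS.span {u}" unfolding in_span1 by blast
      with q(3) show ?thesis by (simp add: v_def)
    qed
  qed
  obtain w1 where w1: "w1 \<in> VV" "bf u w1 = 1" "bf v w1 = 0" using V3[OF u(1) vVV ind] by blast
  obtain w2 where w2: "w2 \<in> VV" "bf v w2 = 1" "bf u w2 = 0" using V3[OF vVV u(1) ind2_sym[OF ind]] by blast
  define z1 where "z1 = cr u w1"
  define z2 where "z2 = cr u w2"
  have z1u: "cr z1 u = - u" using TN(1)[OF u(1) vVV w1(1) u(3) buv cuv] w1 by (simp add: z1_def scale_simps)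
  have vz1: "cr v z1 = - v" using TN(2)[OF u(1) vVV w1(1) u(3) buv cuv] w1 by (simp add: z1_def scale_simps)
  have z2u: "cr z2 u = 0" using TN(1)[OF u(1) vVV w2(1) u(3) buv cuv] w2 by (simp add: z2_def scale_simps)
  have vz2: "cr v z2 = u + u" using TN(2)[OF u(1) vVV w2(1) u(3) buv cuv] w2 by (simp add: z2_def scale_simps)
  have cvu: "cr v u = 0" using cuv cr_anti[of v u] by simp
  have uu: "u + u \<noteq> 0"
  proof
    assume "u + u = 0" then have "u + u = 0 + 0" by simp
    then have "u = 0" by (rule two_cancel)
    with u(2) show False by simp
  qed
  have z1not: "z1 \<notin> OVS.span {u, v}"
  proof
    assume "z1 \<in> OVS.span {u, v}"
    then obtain a b where "z1 = oct_scale a u + oct_scale b v" using in_span2 by blast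
    then have "cr z1 u = 0" using cvu by (simp add: scale_simps)
    with z1u u(2) show False by simp
  qed
  have z2not: "z2 \<notin> OVS.span {u, v}"
  proof
    assume "z2 \<in> OVS.span {u, v}"
    then obtain a b where "z2 = oct_scale a u + oct_scale b v" using in_span2 by blast
    then have "cr v z2 = 0" using cvu by (simp add: scale_simps)
    with vz2 uu show False by simp
  qed
  have b1: "isblock (OVS.span {u, v, z1})"
  proof (rule block_span3[OF u(1) vVV _ ind z1not])
    show "z1 \<in> VV" by (simp add: z1_def)
    show "cr u v \<in> OVS.span {u, v, z1}" using cuv by (simp add: span_intros)
    have "cr u z1 = u" using z1u cr_anti[of u z1] by simp
    then show "cr u z1 \<in> OVS.span {u, v, z1}" by (simp add: span_intros)
    show "cr v z1 \<in> OVS.span {u, v, z1}" using vz1 by (simp add: span_intros)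
  qed
  have b2: "isblock (OVS.span {u, v, z2})"
  proof (rule block_span3[OF u(1) vVV _ ind z2not])
    show "z2 \<in> VV" by (simp add: z2_def)
    show "cr u v \<in> OVS.span {u, v, z2}" using cuv by (simp add: span_intros)
    have "cr u z2 = 0" using z2u cr_anti[of u z2] by simp
    then show "cr u z2 \<in> OVS.span {u, v, z2}" by (simp add: span_intros)
    show "cr v z2 \<in> OVS.span {u, v, z2}" using vz2 by (simp add: span_intros)
  qed
  have neq: "OVS.span {u, v, z1} \<noteq> OVS.span {u, v, z2}"
  proof
    assume eq: "OVS.span {u, v, z1} = OVS.span {u, v, z2}"
    have "z1 \<in> OVS.span {u, v, z1}" by (simp add: span_intros)
    then have "z1 \<in> OVS.span {u, v, z2}" using eq by simp
    then obtain a b c where "z1 = oct_scale a u + oct_scale b v + oct_scale c z2" using in_span3 by blast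
    then have "cr z1 u = 0" using cvu z2u by (simp add: scale_simps)
    with z1u u(2) show False by simp
  qed
  have W1: "OVS.subspace (OVS.span {u, v})" by simp
  have W2: "OVS.span {u, v} \<subseteq> VV" by (rule OVS.span_minimal) (use u(1) vVV VV_sub in auto)
  have W3: "OVS.dim (OVS.span {u, v}) = 2" by (rule dim2[OF ind])
  note W = W1 W2 W3
  have "OVS.span {u, v} \<subseteq> OVS.span {u, v, z1}" by (rule OVS.span_mono) blast
  moreover have "OVS.span {u, v} \<subseteq> OVS.span {u, v, z2}" by (rule OVS.span_mono) blast
  ultimately show ?thesis using W b1 b2 neq by blast
qed

end

theorem mainTheorem2:
  fixes \<alpha> \<beta> \<gamma> :: "'a::field"
  assumes char: "(2::'a) \<noteq> 0"
    and "\<alpha> \<noteq> 0" and "\<beta> \<noteq> 0" and "\<gamma> \<noteq> 0"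
  shows "q_covering_design oct_scale (im_of UNIV) 7 3 2
           {im_of H | H. oct_subalgebra \<alpha> \<beta> \<gamma> H \<and> vector_space.dim oct_scale H = 4}
       \<and> q_covering_minimal oct_scale (im_of UNIV) 2
           {im_of H | H. oct_subalgebra \<alpha> \<beta> \<gamma> H \<and> vector_space.dim oct_scale H = 4}
       \<and> (q_subspace_design oct_scale (im_of UNIV) 2 7 3 1
           {im_of H | H. oct_subalgebra \<alpha> \<beta> \<gamma> H \<and> vector_space.dim oct_scale H = 4}
          \<longleftrightarrow> oct_division \<alpha> \<beta> \<gamma>)"
proof -
  interpret O: octo \<alpha> \<beta> \<gamma> using assms by unfold_locales
  have Beq: "{im_of H | H. oct_subalgebra \<alpha> \<beta> \<gamma> H \<and> vector_space.dim oct_scale H = 4} = {U. O.isblock U}"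
    by (rule O.blocks_eq)
  have V: "im_of UNIV = O.VV" using O.im_of_eq by simp
  have blocks_ok: "\<forall>U\<in>{U. O.isblock U}. OVS.subspace U \<and> U \<subseteq> O.VV \<and> OVS.dim U = 3"
    by (auto simp: O.isblock_def)
  have covers: "q_covers oct_scale O.VV 2 {U. O.isblock U}"
    unfolding q_covers_def using O.cover by blast
  have design: "q_covering_design oct_scale O.VV 7 3 2 {U. O.isblock U}"
    unfolding q_covering_design_def using O.VV_sub O.dimVV blocks_ok covers by blast
  have minimal: "q_covering_minimal oct_scale O.VV 2 {U. O.isblock U}"
    unfolding q_covering_minimal_def
  proof (intro allI impI notI)
    fix B' assume sub: "B' \<subset> {U. O.isblock U}" and cov: "q_covers oct_scale O.VV 2 B'"
    obtain U where U: "O.isblock U" "U \<notin> B'" using sub by blast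
    obtain x y where xy: "x \<in> U" "y \<in> U" "O.ind2 x y" "O.cr x y \<notin> OVS.span {x, y}"
      using O.Mgen[OF U(1)] by blast
    have UVV: "U \<subseteq> O.VV" using U(1) by (simp add: O.isblock_def)
    have W1: "OVS.subspace (OVS.span {x, y})" by simp
    have W2: "OVS.span {x, y} \<subseteq> O.VV" by (rule OVS.span_minimal) (use xy(1,2) UVV O.VV_sub in auto)
    have W3: "OVS.dim (OVS.span {x, y}) = 2" by (rule O.dim2[OF xy(3)])
    note W = W1 W2 W3
    then obtain U' where U': "U' \<in> B'" "OVS.span {x, y} \<subseteq> U'" using cov unfolding q_covers_def by blast
    have bU': "O.isblock U'" using U'(1) sub by blast
    have xyU': "x \<in> U'" "y \<in> U'" using U'(2) OVS.span_base[of x "{x,y}"] OVS.span_base[of y "{x,y}"] by auto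
    have "U' = OVS.span {x, y, O.cr x y}" using O.block_unique[OF bU' xyU' xy(3,4)] .
    moreover have "U = OVS.span {x, y, O.cr x y}" using O.block_unique[OF U(1) xy(1,2,3,4)] .
    ultimately show False using U(2) U'(1) by simp
  qed
  have iff: "q_subspace_design oct_scale O.VV 2 7 3 1 {U. O.isblock U} \<longleftrightarrow> oct_division \<alpha> \<beta> \<gamma>"
  proof
    assume sd: "q_subspace_design oct_scale O.VV 2 7 3 1 {U. O.isblock U}"
    show "oct_division \<alpha> \<beta> \<gamma>"
    proof (rule O.aniso_div)
      show O.aniso unfolding O.aniso_def
      proof (intro ballI impI, rule ccontr)
        fix u assume u: "u \<in> O.VV" "O.bf u u = 0" "u \<noteq> 0"
        obtain W U1 U2 where WU: "OVS.subspace W" "W \<subseteq> O.VV" "OVS.dim W = 2" "O.isblock U1" "O.isblock U2"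
          "U1 \<noteq> U2" "W \<subseteq> U1" "W \<subseteq> U2"
          using O.two_blocks[OF u(1,3,2)] by blast
        have D: "\<forall>W. OVS.subspace W \<and> W \<subseteq> O.VV \<and> OVS.dim W = 2 \<longrightarrow>
            finite {U \<in> {U. O.isblock U}. W \<subseteq> U} \<and> card {U \<in> {U. O.isblock U}. W \<subseteq> U} = 1"
          using sd[unfolded q_subspace_design_def, THEN conjunct2, THEN conjunct2, THEN conjunct2] .
        have fc: "card {U \<in> {U. O.isblock U}. W \<subseteq> U} = 1"
          using D[rule_format, OF conjI[OF WU(1) conjI[OF WU(2) WU(3)]]] by (rule conjunct2)
        obtain A where A: "{U \<in> {U. O.isblock U}. W \<subseteq> U} = {A}" using fc by (rule card_1_singletonE)
        have "U1 \<in> {U \<in> {U. O.isblock U}. W \<subseteq> U}" using WU(4,7) by simp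
        then have "U1 = A" unfolding A by simp
        moreover have "U2 \<in> {U \<in> {U. O.isblock U}. W \<subseteq> U}" using WU(5,8) by simp
        then have "U2 = A" unfolding A by simp
        ultimately show False using WU(6) by simp
      qed
    qed
  next
    assume dv: "oct_division \<alpha> \<beta> \<gamma>"
    have an: O.aniso using O.div_aniso[OF dv] .
    show "q_subspace_design oct_scale O.VV 2 7 3 1 {U. O.isblock U}"
      unfolding q_subspace_design_def
    proof (intro conjI allI impI)
      show "OVS.subspace O.VV" by (rule O.VV_sub)
      show "OVS.dim O.VV = 7" by (rule O.dimVV)
      show "\<forall>U\<in>{U. O.isblock U}. OVS.subspace U \<and> U \<subseteq> O.VV \<and> OVS.dim U = 3" by (rule blocks_ok)
      fix W assume W: "OVS.subspace W \<and> W \<subseteq> O.VV \<and> OVS.dim W = 2"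
      obtain x y where xy: "x \<in> W" "y \<in> W" "O.ind2 x y" "W = OVS.span {x, y}"
        using O.sub2[of W] W by blast
      have VV: "x \<in> O.VV" "y \<in> O.VV" using xy W by auto
      have nin: "O.cr x y \<notin> OVS.span {x, y}"
      proof
        assume "O.cr x y \<in> OVS.span {x, y}"
        then obtain u v where uv: "u \<in> OVS.span {x, y}" "O.ind2 u v" "O.bf u u = 0"
          using O.DegCase[OF VV xy(3)] by blast
        have "u \<in> O.VV" using uv(1) xy(4) W by auto
        then have "u = 0" using an uv(3) unfolding O.aniso_def by blast
        with O.ind2_nz[OF uv(2)] show False by simp
      qed
      have eq: "{U \<in> {U. O.isblock U}. W \<subseteq> U} = {OVS.span {x, y, O.cr x y}}"
      proof
        show "{U \<in> {U. O.isblock U}. W \<subseteq> U} \<subseteq> {OVS.span {x, y, O.cr x y}}"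
        proof
          fix U assume "U \<in> {U \<in> {U. O.isblock U}. W \<subseteq> U}"
          then have "O.isblock U" "x \<in> U" "y \<in> U" using xy by auto
          then show "U \<in> {OVS.span {x, y, O.cr x y}}" using O.block_unique xy(3) nin by blast
        qed
        have "O.isblock (OVS.span {x, y, O.cr x y})" by (rule O.block_nondeg[OF VV xy(3) nin])
        moreover have "W \<subseteq> OVS.span {x, y, O.cr x y}" unfolding xy(4) by (rule OVS.span_mono) auto
        ultimately show "{OVS.span {x, y, O.cr x y}} \<subseteq> {U \<in> {U. O.isblock U}. W \<subseteq> U}" by blast
      qed
      show "finite {U \<in> {U. O.isblock U}. W \<subseteq> U}" unfolding eq by simp
      show "card {U \<in> {U. O.isblock U}. W \<subseteq> U} = 1" unfolding eq by simp
    qed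
  qed
  show ?thesis unfolding Beq V using design minimal iff by blast
qed


end
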